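(* Let $F$ be a bivariate subdistribution function and $F^T(x,y):=F(y,x)$. Then $F$ is strict if and only if both $T_F$ and $T_{F^T}$ are Markov operators.
   Context: $\mathbb{R}_+=[0,\infty)$. A function $F:\mathbb{R}_+^2\to\mathbb{R}_+$ is a bivariate subdistribution function if it is nonnegative, $2$-increasing, bounded above by $\min\{x,y\}$, and Lipschitz with constant $1$. $F$ is strict if $\lim_{t\to\infty}F(w_1,t)=w_1$ and $\lim_{t\to\infty}F(t,w_2)=w_2$ for all $(w_1,w_2)\in\mathbb{R}_+^2$. For such $F$, $T_F$ is the operator on $L^1(\mathbb{R}_+)+L^\infty(\mathbb{R}_+)$ given by $T_Ff(x):=\partial_x\int_0^\infty\partial_2F(x,t)f(t)\,dt$; it is doubly substochastic (positive, linear, maps $L^1$ to $L^1$ and $L^\infty$ to $L^\infty$ contractively in the respective norms, and $Tf=\sup_nTf_n$ whenever $f_n\in L^1\cap L^\infty$, $f\in L^\infty$, $f_n\nearrow f$). A doubly substochastic operator $T$ is a Markov (doubly stochastic) operator if $T\mathbf{1}_{\mathbb{R}_+}=\mathbf{1}_{\mathbb{R}_+}$ and $\int_0^\infty Tf(x)\,dx=\int_0^\infty f(x)\,dx$ for all $f\in L^1(\mathbb{R}_+)$. *)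

theory Defs
  imports "HOL-Analysis.Analysis"
begin

text \<open>Bivariate subdistribution function on the closed quadrant [0,oo)^2.
  Values of F outside the quadrant are irrelevant.\<close>
definition subdistribution :: "(real \<Rightarrow> real \<Rightarrow> real) \<Rightarrow> bool" where
  "subdistribution F \<longleftrightarrow>
     (\<forall>x y. 0 \<le> x \<longrightarrow> 0 \<le> y \<longrightarrow> 0 \<le> F x y) \<and>
     (\<forall>x1 x2 y1 y2. 0 \<le> x1 \<longrightarrow> x1 \<le> x2 \<longrightarrow> 0 \<le> y1 \<longrightarrow> y1 \<le> y2 \<longrightarrow>
        F x2 y2 - F x1 y2 - F x2 y1 + F x1 y1 \<ge> 0) \<and>
     (\<forall>x y. 0 \<le> x \<longrightarrow> 0 \<le> y \<longrightarrow> F x y \<le> min x y) \<and>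
     (\<forall>x y x' y'. 0 \<le> x \<longrightarrow> 0 \<le> y \<longrightarrow> 0 \<le> x' \<longrightarrow> 0 \<le> y' \<longrightarrow>
        \<bar>F x y - F x' y'\<bar> \<le> \<bar>x - x'\<bar> + \<bar>y - y'\<bar>)"

definition strict_subdist :: "(real \<Rightarrow> real \<Rightarrow> real) \<Rightarrow> bool" where
  "strict_subdist F \<longleftrightarrow>
     (\<forall>w1\<ge>0. ((\<lambda>t. F w1 t) \<longlongrightarrow> w1) at_top) \<and>
     (\<forall>w2\<ge>0. ((\<lambda>t. F t w2) \<longlongrightarrow> w2) at_top)"

text \<open>The operator T_F f (x) = d/dx int_0^oo (d/dt F(x,t)) f(t) dt
  (derivatives exist almost everywhere; only a.e. properties are used).\<close>
definition TF :: "(real \<Rightarrow> real \<Rightarrow> real) \<Rightarrow> (real \<Rightarrow> real) \<Rightarrow> real \<Rightarrow> real" where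
  "TF F f x = deriv (\<lambda>y. LINT t:{0..}|lebesgue. deriv (\<lambda>s. F y s) t * f t) x"

definition markov_op :: "((real \<Rightarrow> real) \<Rightarrow> real \<Rightarrow> real) \<Rightarrow> bool" where
  "markov_op T \<longleftrightarrow>
     (AE x in lebesgue. 0 \<le> x \<longrightarrow> T (indicator {0..}) x = 1) \<and>
     (\<forall>f. set_integrable lebesgue {0..} f \<longrightarrow>
        set_integrable lebesgue {0..} (T f) \<and>
        (LINT x:{0..}|lebesgue. T f x) = (LINT x:{0..}|lebesgue. f x))"

end

theory Submission
  imports Defs "HOL-Analysis.Analysis"
begin


lemma disjoint_cball_order:
  fixes a b :: real
  assumes "disjnt (cball a r) (cball b s)" "a \<le> b" "0 \<le> r" "0 \<le> s"
  shows "a + r < b - s"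
proof (rule ccontr)
  assume "\<not> a + r < b - s"
  then have "max (a - r) (b - s) \<in> cball a r \<inter> cball b s"
    using assms by (auto simp: dist_real_def)
  then show False using assms(1) by (auto simp: disjnt_def)
qed

lemma incr_sum_disjoint:
  fixes g :: "real \<Rightarrow> real" and a \<rho> :: "'i \<Rightarrow> real"
  assumes mono: "mono g" and fin: "finite I"
    and pos: "\<And>i. i \<in> I \<Longrightarrow> 0 < \<rho> i"
    and sub: "\<And>i. i \<in> I \<Longrightarrow> c \<le> a i - \<rho> i \<and> a i + \<rho> i \<le> d"
    and disj: "pairwise (\<lambda>i j. disjnt (cball (a i) (\<rho> i)) (cball (a j) (\<rho> j))) I"
    and cd: "c \<le> d"
  shows "(\<Sum>i\<in>I. g (a i + \<rho> i) - g (a i - \<rho> i)) \<le> g d - g c"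
  using fin pos sub disj cd
proof (induction I arbitrary: d rule: finite_psubset_induct)
  case (psubset I)
  show ?case
  proof (cases "I = {}")
    case True
    then show ?thesis using mono psubset.prems by (simp add: monoD)
  next
    case False
    obtain i0 where i0: "i0 \<in> I" "\<And>j. j \<in> I \<Longrightarrow> a j \<le> a i0"
    proof -
      have "Max (a ` I) \<in> a ` I" using False psubset.hyps(1) by (intro Max_in) auto
      then obtain i0 where "i0 \<in> I" "a i0 = Max (a ` I)" by auto
      moreover have "\<And>j. j \<in> I \<Longrightarrow> a j \<le> Max (a ` I)" using psubset.hyps(1) by auto
      ultimately show ?thesis using that by auto
    qed
    have lt: "a j + \<rho> j < a i0 - \<rho> i0" if "j \<in> I - {i0}" for j
    proof -
      have "j \<noteq> i0" "j \<in> I" using that by auto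
      then have "disjnt (cball (a j) (\<rho> j)) (cball (a i0) (\<rho> i0))"
        using psubset.prems(3) i0(1) by (auto simp: pairwise_def)
      moreover have "a j \<le> a i0" "0 \<le> \<rho> j" "0 \<le> \<rho> i0"
        using i0 \<open>j \<in> I\<close> psubset.prems(1)[of j] psubset.prems(1)[of i0] by auto
      ultimately show ?thesis
        using disjoint_cball_order[of "a j" "\<rho> j" "a i0" "\<rho> i0"] by blast
    qed
    have c1: "c \<le> a i0 - \<rho> i0" using psubset.prems(2) i0(1) by blast
    have IH: "(\<Sum>i\<in>I - {i0}. g (a i + \<rho> i) - g (a i - \<rho> i)) \<le> g (a i0 - \<rho> i0) - g c"
    proof (rule psubset.IH)
      show "\<And>i. i \<in> I - {i0} \<Longrightarrow> 0 < \<rho> i" using psubset.prems(1) by auto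
      show "I - {i0} \<subset> I" using i0 by auto
      show "\<And>i. i \<in> I - {i0} \<Longrightarrow> c \<le> a i - \<rho> i \<and> a i + \<rho> i \<le> a i0 - \<rho> i0"
        using psubset.prems(2) lt by (auto intro: less_imp_le)
      show "pairwise (\<lambda>i j. disjnt (cball (a i) (\<rho> i)) (cball (a j) (\<rho> j))) (I - {i0})"
        using psubset.prems(3) by (auto simp: pairwise_def)
      show "c \<le> a i0 - \<rho> i0" by (fact c1)
    qed
    have "(\<Sum>i\<in>I. g (a i + \<rho> i) - g (a i - \<rho> i))
        = (g (a i0 + \<rho> i0) - g (a i0 - \<rho> i0)) + (\<Sum>i\<in>I - {i0}. g (a i + \<rho> i) - g (a i - \<rho> i))"
      using i0(1) psubset.hyps(1) by (simp add: sum.remove)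
    also have "\<dots> \<le> (g (a i0 + \<rho> i0) - g (a i0 - \<rho> i0)) + (g (a i0 - \<rho> i0) - g c)"
      using IH by simp
    also have "\<dots> \<le> g d - g c"
      using psubset.prems(2) i0(1) mono by (auto dest: monoD)
    finally show ?thesis .
  qed
qed

lemma vitali_interval_cover:
  fixes S :: "real set" and P :: "real \<Rightarrow> real \<Rightarrow> bool"
  assumes cov: "\<And>x d. x \<in> S \<Longrightarrow> 0 < d \<Longrightarrow> \<exists>l u. l < u \<and> u - l < d \<and> l \<le> x \<and> x \<le> u \<and> P l u"
  obtains C where "countable C" "\<And>i. i \<in> C \<Longrightarrow> 0 < snd i \<and> P (fst i - snd i) (fst i + snd i)"
    "pairwise (\<lambda>i j. disjnt (cball (fst i) (snd i)) (cball (fst j) (snd j))) C"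
    "negligible (S - (\<Union>i\<in>C. cball (fst i) (snd i)))"
proof -
  let ?K = "{i. 0 < snd i \<and> P (fst i - snd i) (fst i + snd i)}"
  obtain C where "countable C" "C \<subseteq> ?K"
     "pairwise (\<lambda>i j. disjnt (cball (fst i) (snd i)) (cball (fst j) (snd j))) C"
     "negligible(S - (\<Union>i \<in> C. cball (fst i) (snd i)))"
  proof (rule Vitali_covering_theorem_cballs[of ?K snd S fst])
    show "\<And>i. i \<in> ?K \<Longrightarrow> 0 < snd i" by auto
    fix x d assume "x \<in> S" "0 < (d::real)"
    then obtain l u where lu: "l < u" "u - l < d" "l \<le> x" "x \<le> u" "P l u" using cov by blast
    show "\<exists>i. i \<in> ?K \<and> x \<in> cball (fst i) (snd i) \<and> snd i < d"
    proof (rule exI[of _ "((l+u)/2, (u-l)/2)"], intro conjI)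
      have "(l + u) / 2 - (u - l) / 2 = l" "(l + u) / 2 + (u - l) / 2 = u" by (simp_all add: field_simps)
      then show "((l+u)/2, (u-l)/2) \<in> ?K" using lu by auto
      show "x \<in> cball (fst ((l+u)/2, (u-l)/2)) (snd ((l+u)/2, (u-l)/2))"
        using lu by (auto simp: dist_real_def abs_if field_simps)
    qed (use lu in auto)
  qed
  then show ?thesis using that by blast
qed



lemma measure_cball_real: "0 \<le> r \<Longrightarrow> measure lebesgue (cball (c::real) r) = 2 * r"
  by (simp add: cball_eq_atLeastAtMost)

lemma negligible_cball_minus_ball: "negligible (cball (c::real) r - ball c r)"
proof -
  have "cball c r - ball c r \<subseteq> {c - r, c + r}"
    by (auto simp: dist_real_def)
  then show ?thesis by (rule negligible_subset[rotated]) auto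
qed

lemma cball_sub_iff_real:
  fixes l u c r :: real
  assumes "l \<le> u" "{l..u} \<subseteq> cball c r"
  shows "c - r \<le> l \<and> u \<le> c + r"
proof -
  have "l \<in> cball c r" "u \<in> cball c r" using assms by auto
  then show ?thesis by (auto simp: dist_real_def)
qed

lemma A_step:
  fixes g :: "real \<Rightarrow> real" and E U :: "real set"
  assumes mono: "mono g" and rs: "0 < r" "r < s"
    and U: "open U" "bounded U"
    and EU: "E \<subseteq> U"
    and LL: "\<And>x \<delta>. x \<in> E \<Longrightarrow> 0 < \<delta> \<Longrightarrow> \<exists>h. 0 < h \<and> h < \<delta> \<and> g x - g (x - h) < r * h"
    and RU: "\<And>x \<delta>. x \<in> E \<Longrightarrow> 0 < \<delta> \<Longrightarrow> \<exists>h. 0 < h \<and> h < \<delta> \<and> g (x + h) - g x > s * h"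
  shows "\<exists>T. E \<subseteq> T \<and> T \<in> lmeasurable \<and> measure lebesgue T \<le> r / s * measure lebesgue U"
proof -
  have Ulm: "U \<in> lmeasurable" using U by (simp add: lmeasurable_open)
  define P1 where "P1 = (\<lambda>l u. {l..u} \<subseteq> U \<and> g u - g l \<le> r * (u - l))"
  have cov1: "\<exists>l u. l < u \<and> u - l < d \<and> l \<le> x \<and> x \<le> u \<and> P1 l u" if xE: "x \<in> E" and d0: "0 < d" for x d
  proof -
    have "x \<in> U" using EU xE by auto
    then obtain e where e: "e > 0" "ball x e \<subseteq> U" using U(1) openE by metis
    obtain h where h: "0 < h" "h < min d e" "g x - g (x - h) < r * h"
      using LL[OF xE, of "min d e"] e d0 by auto
    have "{x - h..x} \<subseteq> ball x e" using h by (auto simp: dist_real_def)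
    then show ?thesis using h e unfolding P1_def
      by (intro exI[of _ "x - h"] exI[of _ x]) auto
  qed
  obtain C1 where C1: "countable C1" "\<And>i. i \<in> C1 \<Longrightarrow> 0 < snd i \<and> P1 (fst i - snd i) (fst i + snd i)"
    "pairwise (\<lambda>i j. disjnt (cball (fst i) (snd i)) (cball (fst j) (snd j))) C1"
    "negligible (E - (\<Union>i\<in>C1. cball (fst i) (snd i)))"
    using vitali_interval_cover[of E P1] cov1 by blast
  define E2 where "E2 = E \<inter> (\<Union>i\<in>C1. ball (fst i) (snd i))"
  define P2 where "P2 = (\<lambda>l u. (\<exists>i\<in>C1. {l..u} \<subseteq> cball (fst i) (snd i)) \<and> s * (u - l) \<le> g u - g l)"
  have cov2: "\<exists>l u. l < u \<and> u - l < d \<and> l \<le> x \<and> x \<le> u \<and> P2 l u" if xE: "x \<in> E2" and d0: "0 < d" for x d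
  proof -
    obtain i where i: "i \<in> C1" "x \<in> ball (fst i) (snd i)" "x \<in> E" using xE unfolding E2_def by blast
    define e where "e = snd i - dist (fst i) x"
    have e: "e > 0" using i(2) unfolding e_def by auto
    obtain h where h: "0 < h" "h < min d e" "g (x + h) - g x > s * h"
      using RU[OF i(3), of "min d e"] e d0 by auto
    have "{x..x + h} \<subseteq> cball (fst i) (snd i)"
    proof
      fix y assume "y \<in> {x..x+h}"
      then have "dist (fst i) y \<le> dist (fst i) x + h" by (auto simp: dist_real_def)
      then show "y \<in> cball (fst i) (snd i)" using h unfolding e_def by auto
    qed
    then show ?thesis using h e i(1) unfolding P2_def
      by (intro exI[of _ "x"] exI[of _ "x + h"]) auto
  qed
  obtain C2 where C2: "countable C2" "\<And>i. i \<in> C2 \<Longrightarrow> 0 < snd i \<and> P2 (fst i - snd i) (fst i + snd i)"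
    "pairwise (\<lambda>i j. disjnt (cball (fst i) (snd i)) (cball (fst j) (snd j))) C2"
    "negligible (E2 - (\<Union>i\<in>C2. cball (fst i) (snd i)))"
    using vitali_interval_cover[of E2 P2] cov2 by blast
  obtain p where p: "\<And>j. j \<in> C2 \<Longrightarrow> p j \<in> C1 \<and> {fst j - snd j..fst j + snd j} \<subseteq> cball (fst (p j)) (snd (p j))"
    using C2(2) unfolding P2_def by metis
  define W where "W = (\<Union>j\<in>C2. cball (fst j) (snd j))"
  have bound: "measure lebesgue (\<Union>j\<in>F2. cball (fst j) (snd j)) \<le> r / s * measure lebesgue U"
    if F2: "F2 \<subseteq> C2" "finite F2" for F2
  proof -
    have pC1: "\<And>j. j \<in> F2 \<Longrightarrow> p j \<in> C1" using p F2 by blast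
    define \<Delta> where "\<Delta> = (\<lambda>i. g (fst i + snd i) - g (fst i - snd i))"
    have "measure lebesgue (\<Union>j\<in>F2. cball (fst j) (snd j)) \<le> (\<Sum>j\<in>F2. measure lebesgue (cball (fst j) (snd j)))"
      using F2 by (intro measure_UNION_le) auto
    also have "\<dots> = (\<Sum>j\<in>F2. 2 * snd j)"
      using F2 C2(2) by (intro sum.cong refl measure_cball_real) (auto intro: less_imp_le)
    also have "\<dots> \<le> (\<Sum>j\<in>F2. \<Delta> j / s)"
    proof (rule sum_mono)
      fix j assume "j \<in> F2"
      then have "s * (2 * snd j) \<le> \<Delta> j" using C2(2)[of j] F2 unfolding P2_def \<Delta>_def by auto
      then show "2 * snd j \<le> \<Delta> j / s" using rs by (simp add: field_simps)
    qed
    also have "\<dots> = (\<Sum>i\<in>p ` F2. \<Sum>j\<in>{j \<in> F2. p j = i}. \<Delta> j / s)"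
      using F2 by (intro sum.group[symmetric]) auto
    also have "\<dots> \<le> (\<Sum>i\<in>p ` F2. \<Delta> i / s)"
    proof (rule sum_mono)
      fix i assume i: "i \<in> p ` F2"
      then have iC1: "i \<in> C1" using pC1 by blast
      have "(\<Sum>j\<in>{j \<in> F2. p j = i}. g (fst j + snd j) - g (fst j - snd j)) \<le> g (fst i + snd i) - g (fst i - snd i)"
      proof (rule incr_sum_disjoint[OF mono])
        show "finite {j \<in> F2. p j = i}" using F2 by auto
        show "\<And>j. j \<in> {j \<in> F2. p j = i} \<Longrightarrow> 0 < snd j" using F2 C2(2) by auto
        show "\<And>j. j \<in> {j \<in> F2. p j = i} \<Longrightarrow> fst i - snd i \<le> fst j - snd j \<and> fst j + snd j \<le> fst i + snd i"
        proof -
          fix j assume j: "j \<in> {j \<in> F2. p j = i}"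
          then have "j \<in> C2" "p j = i" using F2 by auto
          then show "fst i - snd i \<le> fst j - snd j \<and> fst j + snd j \<le> fst i + snd i"
            using p[of j] C2(2)[of j] by (intro cball_sub_iff_real) auto
        qed
        show "pairwise (\<lambda>i j. disjnt (cball (fst i) (snd i)) (cball (fst j) (snd j))) {j \<in> F2. p j = i}"
          by (rule pairwise_subset[OF C2(3)]) (use F2 in auto)
        show "fst i - snd i \<le> fst i + snd i" using C1(2)[OF iC1] by auto
      qed
      then show "(\<Sum>j\<in>{j \<in> F2. p j = i}. \<Delta> j / s) \<le> \<Delta> i / s"
        unfolding \<Delta>_def using rs by (simp add: sum_divide_distrib[symmetric] divide_right_mono)
    qed
    also have "\<dots> \<le> (\<Sum>i\<in>p ` F2. r / s * (2 * snd i))"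
    proof (rule sum_mono)
      fix i assume "i \<in> p ` F2"
      then have "i \<in> C1" using pC1 by blast
      then have "\<Delta> i \<le> r * (2 * snd i)" using C1(2)[of i] unfolding P1_def \<Delta>_def by auto
      then show "\<Delta> i / s \<le> r / s * (2 * snd i)" using rs by (simp add: field_simps)
    qed
    also have "\<dots> = r / s * (\<Sum>i\<in>p ` F2. measure lebesgue (cball (fst i) (snd i)))"
    proof -
      have meq: "measure lebesgue (cball (fst i) (snd i)) = 2 * snd i" if "i \<in> p ` F2" for i
      proof -
        from that obtain j where j: "j \<in> F2" "i = p j" by auto
        then have "i \<in> C1" using pC1 by blast
        then have "0 < snd i" using C1(2) by blast
        then show ?thesis by (intro measure_cball_real) simp
      qed
      show ?thesis unfolding sum_distrib_left by (rule sum.cong[OF refl]) (simp only: meq)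
    qed
    also have "\<dots> = r / s * measure lebesgue (\<Union>i\<in>p ` F2. cball (fst i) (snd i))"
    proof -
      have "pairwise (\<lambda>i j. disjnt (cball (fst i) (snd i)) (cball (fst j) (snd j))) (p ` F2)"
        by (rule pairwise_subset[OF C1(3)]) (use pC1 in blast)
      then show ?thesis using F2 by (subst measure_UNION') (auto simp: pairwise_def)
    qed
    also have "\<dots> \<le> r / s * measure lebesgue U"
    proof -
      have "(\<Union>i\<in>p ` F2. cball (fst i) (snd i)) \<subseteq> U"
      proof
        fix y assume "y \<in> (\<Union>i\<in>p ` F2. cball (fst i) (snd i))"
        then obtain j where "j \<in> F2" "y \<in> cball (fst (p j)) (snd (p j))" by auto
        moreover have "p j \<in> C1" using pC1 \<open>j \<in> F2\<close> by blast
        ultimately show "y \<in> U" using C1(2)[of "p j"] unfolding P1_def by (auto simp: cball_eq_atLeastAtMost)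
      qed
      then show ?thesis using rs Ulm F2
        by (intro mult_left_mono measure_mono_fmeasurable) (auto intro!: fmeasurable.finite_UN)
    qed
    finally show ?thesis .
  qed
  have Wlm: "W \<in> lmeasurable"
    unfolding W_def by (rule fmeasurable_UN_bound[OF C2(1) _ bound]) auto
  have Wm: "measure lebesgue W \<le> r / s * measure lebesgue U"
    unfolding W_def by (rule measure_UN_bound[OF C2(1) _ bound]) auto
  define N where "N = (E - (\<Union>i\<in>C1. cball (fst i) (snd i))) \<union> (\<Union>i\<in>C1. cball (fst i) (snd i) - ball (fst i) (snd i))
     \<union> (E2 - W)"
  have Nneg: "negligible N"
    unfolding N_def W_def using C1 C2
    by (intro negligible_Un negligible_countable_Union) (auto intro: negligible_cball_minus_ball)
  have "E \<subseteq> W \<union> N"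
    unfolding N_def E2_def by blast
  moreover have "W \<union> N \<in> lmeasurable" using Wlm Nneg by (auto intro: negligible_imp_measurable)
  moreover have "measure lebesgue (W \<union> N) \<le> r / s * measure lebesgue U"
  proof -
    have "measure lebesgue (W \<union> N) \<le> measure lebesgue W + measure lebesgue N"
      using Wlm negligible_imp_measurable[OF Nneg] by (intro measure_Un_le) (auto simp: fmeasurable_def)
    then show ?thesis using Wm negligible_imp_measure0[OF Nneg] by simp
  qed
  ultimately show ?thesis by blast
qed

lemma A_negligible:
  fixes g :: "real \<Rightarrow> real" and E :: "real set"
  assumes mono: "mono g" and rs: "0 < r" "r < s"
    and EV: "E \<subseteq> {a<..<b}"
    and LL: "\<And>x \<delta>. x \<in> E \<Longrightarrow> 0 < \<delta> \<Longrightarrow> \<exists>h. 0 < h \<and> h < \<delta> \<and> g x - g (x - h) < r * h"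
    and RU: "\<And>x \<delta>. x \<in> E \<Longrightarrow> 0 < \<delta> \<Longrightarrow> \<exists>h. 0 < h \<and> h < \<delta> \<and> g (x + h) - g x > s * h"
  shows "negligible E"
proof -
  define V0 where "V0 = {a<..<b}"
  have V0lm: "V0 \<in> lmeasurable" unfolding V0_def by simp
  obtain H where H: "H \<in> sets lebesgue" "E \<subseteq> H" "outer_measure_of lebesgue E = emeasure lebesgue H"
    using outer_measure_of_attain[of E lebesgue] by auto
  define H' where "H' = V0 \<inter> H"
  have H'lm: "H' \<in> lmeasurable" unfolding H'_def using V0lm H(1) by (rule fmeasurable_Int_fmeasurable)
  have EH': "E \<subseteq> H'" using H(2) EV unfolding H'_def V0_def by auto
  have minimal: "measure lebesgue H' \<le> measure lebesgue T" if T: "T \<in> lmeasurable" "E \<subseteq> T" for T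
  proof -
    have "emeasure lebesgue H' \<le> emeasure lebesgue H"
      unfolding H'_def using H(1) by (intro emeasure_mono) auto
    also have "\<dots> = outer_measure_of lebesgue E" using H(3) by simp
    also have "\<dots> \<le> emeasure lebesgue T"
      unfolding outer_measure_of_def using T by (intro INF_lower) (auto simp: fmeasurable_def)
    finally have "ennreal (measure lebesgue H') \<le> ennreal (measure lebesgue T)"
      using H'lm T(1) by (simp add: emeasure_eq_measure2)
    then show ?thesis by (simp add: ennreal_le_iff)
  qed
  define m where "m = measure lebesgue H'"
  have m0: "0 \<le> m" unfolding m_def by simp
  have key: "m \<le> r / s * (m + e)" if e: "e > 0" for e
  proof -
    obtain U where U: "open U" "H' \<subseteq> U" "(U - H') \<in> lmeasurable" "emeasure lebesgue (U - H') < ennreal e"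
      using sets_lebesgue_outer_open[of H' e] H'lm e by (auto simp: fmeasurable_def)
    define U' where "U' = U \<inter> V0"
    have U'o: "open U'" "bounded U'" unfolding U'_def V0_def using U(1) by auto
    have EU': "E \<subseteq> U'" using EH' U(2) unfolding U'_def H'_def by auto
    have U'lm: "U' \<in> lmeasurable" using U'o by (simp add: lmeasurable_open)
    have "measure lebesgue U' \<le> measure lebesgue H' + measure lebesgue (U - H')"
    proof -
      have "U' \<subseteq> H' \<union> (U - H')" unfolding U'_def by auto
      then have "measure lebesgue U' \<le> measure lebesgue (H' \<union> (U - H'))"
      proof (rule measure_mono_fmeasurable)
        show "U' \<in> sets lebesgue" using U'lm by (simp add: fmeasurable_def)
        show "H' \<union> (U - H') \<in> lmeasurable" using H'lm U(3) by (rule fmeasurable.Un)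
      qed
      also have "\<dots> \<le> measure lebesgue H' + measure lebesgue (U - H')"
        using H'lm U(3) by (intro measure_Un_le) (auto simp: fmeasurable_def)
      finally show ?thesis .
    qed
    moreover have "measure lebesgue (U - H') \<le> e"
      using U(3) U(4) e by (simp add: emeasure_eq_measure2 ennreal_less_iff less_imp_le)
    ultimately have U'm: "measure lebesgue U' \<le> m + e" unfolding m_def by linarith
    obtain T where T: "E \<subseteq> T" "T \<in> lmeasurable" "measure lebesgue T \<le> r / s * measure lebesgue U'"
      using A_step[OF mono rs U'o EU' LL RU] by blast
    have "m \<le> measure lebesgue T" unfolding m_def using minimal T by blast
    also have "\<dots> \<le> r / s * measure lebesgue U'" by (fact T(3))
    also have "\<dots> \<le> r / s * (m + e)" using U'm rs by (intro mult_left_mono) auto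
    finally show ?thesis .
  qed
  have "m * (1 - r / s) \<le> 0"
  proof (rule field_le_epsilon)
    fix e :: real assume e: "0 < e"
    have "m \<le> r / s * (m + e * s / r)" using key[of "e * s / r"] e rs by simp
    also have "\<dots> = r / s * m + e" using rs by (simp add: field_simps)
    finally show "m * (1 - r / s) \<le> 0 + e" by (simp add: algebra_simps)
  qed
  moreover have "0 < 1 - r / s" using rs by simp
  ultimately have "m = 0" using m0 by (simp add: mult_le_0_iff)
  then have "negligible H'" using H'lm unfolding m_def by (simp add: negligible_iff_measure0)
  then show ?thesis using EH' by (rule negligible_subset)
qed



lemma big_negligible:
  fixes g :: "real \<Rightarrow> real" and E :: "real set"
  assumes mono: "mono g" and EV: "E \<subseteq> {a<..<b}"
    and big: "\<And>x M \<delta>. x \<in> E \<Longrightarrow> 0 < \<delta> \<Longrightarrow> \<exists>l u. l < u \<and> u - l < \<delta> \<and> l \<le> x \<and> x \<le> u \<and> g u - g l > M * (u - l)"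
  shows "negligible E"
  unfolding negligible_outer_le
proof (intro allI impI)
  fix e :: real assume e: "0 < e"
  have ab: "a < b" if ne: "E \<noteq> {}"
  proof -
    obtain x where "x \<in> E" using ne by blast
    then have "x \<in> {a<..<b}" using EV by blast
    then show ?thesis by simp
  qed
  define K where "K = g (b + 1) - g (a - 1)"
  define M where "M = K / e + 1"
  have K0: "0 \<le> K" if ab': "a \<le> b" unfolding K_def using monoD[OF mono, of "a - 1" "b + 1"] ab' by simp
  show "\<exists>T. E \<subseteq> T \<and> T \<in> lmeasurable \<and> measure lebesgue T \<le> e"
  proof (cases "E = {}")
    case True then show ?thesis using e by (intro exI[of _ "{}"]) auto
  next
    case False
    then have K0: "0 \<le> K" using K0 ab by auto
    have M0: "0 < M" unfolding M_def using K0 e by (auto intro: add_nonneg_pos)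
    define P where "P = (\<lambda>l u. {l..u} \<subseteq> {a - 1..b + 1} \<and> M * (u - l) \<le> g u - g l)"
    have cov: "\<exists>l u. l < u \<and> u - l < d \<and> l \<le> x \<and> x \<le> u \<and> P l u" if xE: "x \<in> E" and d0: "0 < d" for x d
    proof -
      obtain l u where lu: "l < u" "u - l < min d 1" "l \<le> x" "x \<le> u" "g u - g l > M * (u - l)"
        using big[OF xE, of "min d 1" M] d0 by auto
      have "x \<in> {a<..<b}" using xE EV by auto
      then have "{l..u} \<subseteq> {a - 1..b + 1}" using lu by auto
      then show ?thesis using lu unfolding P_def by (intro exI[of _ l] exI[of _ u]) auto
    qed
    obtain C where C: "countable C" "\<And>i. i \<in> C \<Longrightarrow> 0 < snd i \<and> P (fst i - snd i) (fst i + snd i)"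
      "pairwise (\<lambda>i j. disjnt (cball (fst i) (snd i)) (cball (fst j) (snd j))) C"
      "negligible (E - (\<Union>i\<in>C. cball (fst i) (snd i)))"
      using vitali_interval_cover[of E P] cov by blast
    define W where "W = (\<Union>j\<in>C. cball (fst j) (snd j))"
    have bound: "measure lebesgue (\<Union>j\<in>F. cball (fst j) (snd j)) \<le> e" if F: "F \<subseteq> C" "finite F" for F
    proof -
      have "measure lebesgue (\<Union>j\<in>F. cball (fst j) (snd j)) \<le> (\<Sum>j\<in>F. measure lebesgue (cball (fst j) (snd j)))"
        using F by (intro measure_UNION_le) auto
      also have "\<dots> = (\<Sum>j\<in>F. 2 * snd j)"
      proof (rule sum.cong[OF refl])
        fix j assume "j \<in> F"
        then have "0 < snd j" using C(2) F by blast
        then show "measure lebesgue (cball (fst j) (snd j)) = 2 * snd j" by (intro measure_cball_real) simp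
      qed
      also have "\<dots> \<le> (\<Sum>j\<in>F. (g (fst j + snd j) - g (fst j - snd j)) / M)"
      proof (rule sum_mono)
        fix j assume "j \<in> F"
        then have "M * (2 * snd j) \<le> g (fst j + snd j) - g (fst j - snd j)" using C(2)[of j] F unfolding P_def by auto
        then show "2 * snd j \<le> (g (fst j + snd j) - g (fst j - snd j)) / M" using M0 by (simp add: field_simps)
      qed
      also have "\<dots> = (\<Sum>j\<in>F. g (fst j + snd j) - g (fst j - snd j)) / M"
        by (simp add: sum_divide_distrib)
      also have "\<dots> \<le> K / M"
      proof (rule divide_right_mono[OF _ less_imp_le[OF M0]])
        show "(\<Sum>j\<in>F. g (fst j + snd j) - g (fst j - snd j)) \<le> K"
          unfolding K_def
        proof (rule incr_sum_disjoint[OF mono F(2)])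
          show "\<And>i. i \<in> F \<Longrightarrow> 0 < snd i" using C(2) F by blast
          show "\<And>i. i \<in> F \<Longrightarrow> a - 1 \<le> fst i - snd i \<and> fst i + snd i \<le> b + 1"
            using C(2) F unfolding P_def by fastforce
          show "pairwise (\<lambda>i j. disjnt (cball (fst i) (snd i)) (cball (fst j) (snd j))) F"
            by (rule pairwise_subset[OF C(3) F(1)])
          show "a - 1 \<le> b + 1" using ab False by auto
        qed
      qed
      also have "\<dots> \<le> e"
      proof -
        have "K \<le> e * M" unfolding M_def using e by (simp add: field_simps)
        then show ?thesis using M0 by (simp add: field_simps)
      qed
      finally show ?thesis .
    qed
    have Wlm: "W \<in> lmeasurable"
      unfolding W_def by (rule fmeasurable_UN_bound[OF C(1) _ bound]) auto
    have Wm: "measure lebesgue W \<le> e"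
      unfolding W_def by (rule measure_UN_bound[OF C(1) _ bound]) auto
    have Nneg: "negligible (E - W)" using C(4) unfolding W_def .
    show ?thesis
    proof (intro exI conjI)
      show "E \<subseteq> W \<union> (E - W)" by auto
      show "W \<union> (E - W) \<in> lmeasurable" using Wlm negligible_imp_measurable[OF Nneg] by (rule fmeasurable.Un)
      have "measure lebesgue (W \<union> (E - W)) \<le> measure lebesgue W + measure lebesgue (E - W)"
        using Wlm negligible_imp_measurable[OF Nneg] by (intro measure_Un_le) (auto simp: fmeasurable_def)
      then show "measure lebesgue (W \<union> (E - W)) \<le> e" using Wm negligible_imp_measure0[OF Nneg] by simp
    qed
  qed
qed

definition LLd :: "(real \<Rightarrow> real) \<Rightarrow> real \<Rightarrow> real \<Rightarrow> bool" where
  "LLd g x r \<longleftrightarrow> (\<forall>\<delta>>0. \<exists>h. 0 < h \<and> h < \<delta> \<and> g x - g (x - h) < r * h)"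
definition RUd :: "(real \<Rightarrow> real) \<Rightarrow> real \<Rightarrow> real \<Rightarrow> bool" where
  "RUd g x s \<longleftrightarrow> (\<forall>\<delta>>0. \<exists>h. 0 < h \<and> h < \<delta> \<and> s * h < g (x + h) - g x)"
definition RLd :: "(real \<Rightarrow> real) \<Rightarrow> real \<Rightarrow> real \<Rightarrow> bool" where
  "RLd g x r \<longleftrightarrow> (\<forall>\<delta>>0. \<exists>h. 0 < h \<and> h < \<delta> \<and> g (x + h) - g x < r * h)"
definition LUd :: "(real \<Rightarrow> real) \<Rightarrow> real \<Rightarrow> real \<Rightarrow> bool" where
  "LUd g x s \<longleftrightarrow> (\<forall>\<delta>>0. \<exists>h. 0 < h \<and> h < \<delta> \<and> s * h < g x - g (x - h))"

lemma ev_at_right0: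
  assumes "0 < \<delta>" "\<And>h. 0 < h \<Longrightarrow> h < \<delta> \<Longrightarrow> P h"
  shows "eventually P (at_right (0::real))"
  using eventually_at_right_real[OF assms(1)] by (rule eventually_mono) (use assms(2) in auto)

lemma ev_at_left0:
  assumes "0 < \<delta>" "\<And>h. 0 < h \<Longrightarrow> h < \<delta> \<Longrightarrow> P (- h)"
  shows "eventually P (at_left (0::real))"
proof -
  have "eventually (\<lambda>y. y \<in> {-\<delta><..<0}) (at_left (0::real))"
    using assms(1) by (intro eventually_at_left_real) auto
  then show ?thesis
  proof (rule eventually_mono)
    fix y assume "y \<in> {-\<delta><..<0}"
    then show "P y" using assms(2)[of "-y"] by auto
  qed
qed

lemma rat_between_ereal:
  fixes a b :: ereal
  assumes "a < b"
  obtains r where "r \<in> \<rat>" "a < ereal r" "ereal r < b"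
proof -
  obtain z where z: "a < ereal z" "ereal z < b" using ereal_dense2[OF assms] by blast
  obtain z' where z': "a < ereal z'" "ereal z' < ereal z" using ereal_dense2[OF z(1)] by blast
  obtain r where "r \<in> \<rat>" "z' < r" "r < z" using Rats_dense_in_real[of z' z] z'(2) by auto
  then show ?thesis using that z z' by (meson ereal_less_eq(3) less_ereal.simps(1) less_le_trans order.strict_trans)
qed

lemma dini_diff:
  fixes g :: "real \<Rightarrow> real"
  assumes mono: "mono g"
    and nA: "\<And>r s. r \<in> \<rat> \<Longrightarrow> s \<in> \<rat> \<Longrightarrow> 0 < r \<Longrightarrow> r < s \<Longrightarrow> \<not> (LLd g x r \<and> RUd g x s)"
    and nB: "\<And>r s. r \<in> \<rat> \<Longrightarrow> s \<in> \<rat> \<Longrightarrow> 0 < r \<Longrightarrow> r < s \<Longrightarrow> \<not> (RLd g x r \<and> LUd g x s)"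
    and nC1: "\<not> (\<forall>M. RUd g x M)"
  shows "g differentiable (at x)"
proof -
  define Q where "Q = (\<lambda>h. (g (x + h) - g x) / h)"
  define f where "f = (\<lambda>h. ereal (Q h))"
  define Dp where "Dp = Limsup (at_right 0) f"
  define dp where "dp = Liminf (at_right 0) f"
  define Dm where "Dm = Limsup (at_left 0) f"
  define dm where "dm = Liminf (at_left 0) f"
  have Ql: "Q (- h) = (g x - g (x - h)) / h" for h
    unfolding Q_def by (cases "h = 0") (simp_all add: field_simps)
  have Qnn: "0 \<le> Q h" for h
  proof (cases "h > 0")
    case True
    then have "g x \<le> g (x + h)" using monoD[OF mono, of x "x + h"] by simp
    then show ?thesis using True unfolding Q_def by simp
  next
    case False
    then have "g (x + h) \<le> g x" using monoD[OF mono, of "x + h" x] by simp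
    then show ?thesis using False unfolding Q_def by (simp add: divide_nonpos_nonpos)
  qed
  have dp0: "0 \<le> dp" unfolding dp_def f_def by (intro Liminf_bounded always_eventually) (simp add: Qnn)
  have dm0: "0 \<le> dm" unfolding dm_def f_def by (intro Liminf_bounded always_eventually) (simp add: Qnn)
  have c1: "LLd g x r" if "dm < ereal r" for r
  proof (rule ccontr)
    assume "\<not> LLd g x r"
    then obtain \<delta> where \<delta>: "\<delta> > 0" "\<And>h. 0 < h \<Longrightarrow> h < \<delta> \<Longrightarrow> r * h \<le> g x - g (x - h)"
      unfolding LLd_def by (meson not_less)
    have "eventually (\<lambda>h. ereal r \<le> f h) (at_left 0)"
    proof (rule ev_at_left0[OF \<delta>(1)])
      fix h :: real assume "0 < h" "h < \<delta>"
      then show "ereal r \<le> f (- h)" using \<delta>(2)[of h] unfolding f_def Ql by (simp add: field_simps)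
    qed
    then have "ereal r \<le> dm" unfolding dm_def by (rule Liminf_bounded)
    then show False using that by simp
  qed
  have c2: "RUd g x s" if "ereal s < Dp" for s
  proof (rule ccontr)
    assume "\<not> RUd g x s"
    then obtain \<delta> where \<delta>: "\<delta> > 0" "\<And>h. 0 < h \<Longrightarrow> h < \<delta> \<Longrightarrow> g (x + h) - g x \<le> s * h"
      unfolding RUd_def by (meson not_less)
    have "eventually (\<lambda>h. f h \<le> ereal s) (at_right 0)"
    proof (rule ev_at_right0[OF \<delta>(1)])
      fix h :: real assume "0 < h" "h < \<delta>"
      then show "f h \<le> ereal s" using \<delta>(2)[of h] unfolding f_def Q_def by (simp add: field_simps)
    qed
    then have "Dp \<le> ereal s" unfolding Dp_def by (rule Limsup_bounded)
    then show False using that by simp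
  qed
  have c3: "RLd g x r" if "dp < ereal r" for r
  proof (rule ccontr)
    assume "\<not> RLd g x r"
    then obtain \<delta> where \<delta>: "\<delta> > 0" "\<And>h. 0 < h \<Longrightarrow> h < \<delta> \<Longrightarrow> r * h \<le> g (x + h) - g x"
      unfolding RLd_def by (meson not_less)
    have "eventually (\<lambda>h. ereal r \<le> f h) (at_right 0)"
    proof (rule ev_at_right0[OF \<delta>(1)])
      fix h :: real assume "0 < h" "h < \<delta>"
      then show "ereal r \<le> f h" using \<delta>(2)[of h] unfolding f_def Q_def by (simp add: field_simps)
    qed
    then have "ereal r \<le> dp" unfolding dp_def by (rule Liminf_bounded)
    then show False using that by simp
  qed
  have c4: "LUd g x s" if "ereal s < Dm" for s
  proof (rule ccontr)
    assume "\<not> LUd g x s"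
    then obtain \<delta> where \<delta>: "\<delta> > 0" "\<And>h. 0 < h \<Longrightarrow> h < \<delta> \<Longrightarrow> g x - g (x - h) \<le> s * h"
      unfolding LUd_def by (meson not_less)
    have "eventually (\<lambda>h. f h \<le> ereal s) (at_left 0)"
    proof (rule ev_at_left0[OF \<delta>(1)])
      fix h :: real assume "0 < h" "h < \<delta>"
      then show "f (- h) \<le> ereal s" using \<delta>(2)[of h] unfolding f_def Ql by (simp add: field_simps)
    qed
    then have "Dm \<le> ereal s" unfolding Dm_def by (rule Limsup_bounded)
    then show False using that by simp
  qed
  have le1: "Dp \<le> dm"
  proof (rule ccontr)
    assume "\<not> Dp \<le> dm"
    then have "dm < Dp" by simp
    then obtain z where z: "dm < ereal z" "ereal z < Dp" using ereal_dense2 by blast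
    obtain r where r: "r \<in> \<rat>" "dm < ereal r" "ereal r < ereal z" using rat_between_ereal[OF z(1)] by blast
    obtain s where s: "s \<in> \<rat>" "ereal z < ereal s" "ereal s < Dp" using rat_between_ereal[OF z(2)] by blast
    have "(0::ereal) < ereal r" using dm0 r(2) by (rule le_less_trans)
    then have "0 < r" by simp
    moreover have "r < s" using r s by simp
    ultimately show False using nA[OF r(1) s(1)] c1[OF r(2)] c2[OF s(3)] by blast
  qed
  have le2: "Dm \<le> dp"
  proof (rule ccontr)
    assume "\<not> Dm \<le> dp"
    then have "dp < Dm" by simp
    then obtain z where z: "dp < ereal z" "ereal z < Dm" using ereal_dense2 by blast
    obtain r where r: "r \<in> \<rat>" "dp < ereal r" "ereal r < ereal z" using rat_between_ereal[OF z(1)] by blast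
    obtain s where s: "s \<in> \<rat>" "ereal z < ereal s" "ereal s < Dm" using rat_between_ereal[OF z(2)] by blast
    have "(0::ereal) < ereal r" using dp0 r(2) by (rule le_less_trans)
    then have "0 < r" by simp
    moreover have "r < s" using r s by simp
    ultimately show False using nB[OF r(1) s(1)] c3[OF r(2)] c4[OF s(3)] by blast
  qed
  have le3: "dp \<le> Dp" unfolding dp_def Dp_def by (rule Liminf_le_Limsup) simp
  have le4: "dm \<le> Dm" unfolding dm_def Dm_def by (rule Liminf_le_Limsup) simp
  have eq: "dp = Dp" "dm = Dp" "Dm = Dp" using le1 le2 le3 le4 by auto
  obtain M where M: "\<not> RUd g x M" using nC1 by blast
  have "Dp \<le> ereal M"
  proof (rule ccontr)
    assume "\<not> Dp \<le> ereal M"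
    then have "ereal M < Dp" by (simp add: not_le)
    then show False using c2[of M] M by blast
  qed
  moreover have "0 \<le> Dp" using dp0 eq by simp
  ultimately obtain l where l: "Dp = ereal l" by (cases Dp) auto
  have "(f \<longlongrightarrow> ereal l) (at_right 0)"
    using eq l unfolding Dp_def dp_def by (subst tendsto_iff_Liminf_eq_Limsup) auto
  then have r: "(Q \<longlongrightarrow> l) (at_right 0)" unfolding f_def by simp
  have "(f \<longlongrightarrow> ereal l) (at_left 0)"
    using eq l unfolding Dp_def dm_def Dm_def by (subst tendsto_iff_Liminf_eq_Limsup) auto
  then have lft: "(Q \<longlongrightarrow> l) (at_left 0)" unfolding f_def by simp
  have "(Q \<longlongrightarrow> l) (at 0)" using lft r by (rule filterlim_split_at)
  then have "DERIV g x :> l" unfolding DERIV_def Q_def .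
  then show ?thesis by (auto simp: real_differentiable_def)
qed

lemma mono_reflect: "mono g \<Longrightarrow> mono (\<lambda>y. - g (- y :: real) :: real)"
  by (auto simp: mono_def)

lemma mono_ae_differentiable_interval:
  fixes g :: "real \<Rightarrow> real"
  assumes mono: "mono g"
  shows "negligible {x \<in> {a<..<b}. \<not> g differentiable (at x)}"
proof -
  define A where "A = (\<lambda>(r, s). {x \<in> {a<..<b}. 0 < r \<and> r < s \<and> LLd g x r \<and> RUd g x s})"
  define B where "B = (\<lambda>(r, s). {x \<in> {a<..<b}. 0 < r \<and> r < s \<and> RLd g x r \<and> LUd g x s})"
  define C where "C = {x \<in> {a<..<b}. \<forall>M. RUd g x M}"
  define g' where "g' = (\<lambda>y. - g (- y))"
  have mono': "mono g'" unfolding g'_def using mono by (rule mono_reflect)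
  have QQ: "countable (\<rat> \<times> \<rat>)" by (rule countable_SIGMA) (rule countable_rat)+
  have sub: "{x \<in> {a<..<b}. \<not> g differentiable (at x)} \<subseteq> \<Union>(A ` (\<rat> \<times> \<rat>)) \<union> \<Union>(B ` (\<rat> \<times> \<rat>)) \<union> C"
  proof
    fix x assume x: "x \<in> {x \<in> {a<..<b}. \<not> g differentiable (at x)}"
    show "x \<in> \<Union>(A ` (\<rat> \<times> \<rat>)) \<union> \<Union>(B ` (\<rat> \<times> \<rat>)) \<union> C"
    proof (rule ccontr)
      assume nx: "x \<notin> \<Union>(A ` (\<rat> \<times> \<rat>)) \<union> \<Union>(B ` (\<rat> \<times> \<rat>)) \<union> C"
      have "g differentiable (at x)"
      proof (rule dini_diff[OF mono])
        fix r s :: real assume rs: "r \<in> \<rat>" "s \<in> \<rat>" "0 < r" "r < s"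
        show "\<not> (LLd g x r \<and> RUd g x s)"
        proof
          assume "LLd g x r \<and> RUd g x s"
          then have "x \<in> A (r, s)" using x rs unfolding A_def by auto
          then show False using nx rs by blast
        qed
      next
        fix r s :: real assume rs: "r \<in> \<rat>" "s \<in> \<rat>" "0 < r" "r < s"
        show "\<not> (RLd g x r \<and> LUd g x s)"
        proof
          assume "RLd g x r \<and> LUd g x s"
          then have "x \<in> B (r, s)" using x rs unfolding B_def by auto
          then show False using nx rs by blast
        qed
      next
        show "\<not> (\<forall>M. RUd g x M)" using nx x unfolding C_def by blast

      qed
      then show False using x by simp
    qed
  qed
  have negA: "negligible (A p)" for p
  proof (cases p)
    case (Pair r s)
    show ?thesis
    proof (cases "0 < r \<and> r < s")
      case True
      show ?thesis unfolding Pair A_def case_prod_conv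
      proof (rule A_negligible[OF mono, of r s _ a b])
        show "0 < r" "r < s" using True by auto
      qed (auto simp: LLd_def RUd_def)
    next
      case False
      then have "A p = {}" unfolding Pair A_def by auto
      then show ?thesis by simp
    qed
  qed
  have negB: "negligible (B p)" for p
  proof (cases p)
    case (Pair r s)
    define A' where "A' = {y \<in> {-b<..<-a}. 0 < r \<and> r < s \<and> LLd g' y r \<and> RUd g' y s}"
    have negA': "negligible A'"
    proof (cases "0 < r \<and> r < s")
      case True
      show ?thesis unfolding A'_def
      proof (rule A_negligible[OF mono', of r s _ "-b" "-a"])
        show "0 < r" "r < s" using True by auto
      qed (auto simp: LLd_def RUd_def)
    next
      case False
      then have "A' = {}" unfolding A'_def by auto
      then show ?thesis by simp
    qed
    have "B p \<subseteq> uminus ` A'"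
    proof
      fix x assume "x \<in> B p"
      then have x: "x \<in> {a<..<b}" "0 < r" "r < s" "RLd g x r" "LUd g x s" unfolding Pair B_def by auto
      have "LLd g' (- x) r" using x(4) unfolding LLd_def RLd_def g'_def by (simp add: add.commute)
      moreover have "RUd g' (- x) s" using x(5) unfolding RUd_def LUd_def g'_def by (simp add: add.commute)
      ultimately have "- x \<in> A'" using x unfolding A'_def by auto
      then show "x \<in> uminus ` A'" by (metis image_eqI minus_minus)
    qed
    moreover have "negligible (uminus ` A')"
      by (rule negligible_differentiable_image_negligible[OF order_refl negA']) (auto intro!: derivative_intros)
    ultimately show ?thesis by (rule negligible_subset[rotated])
  qed
  have negC: "negligible C"
  proof (rule big_negligible[OF mono, of C a b])
    show "C \<subseteq> {a<..<b}" unfolding C_def by auto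
    fix x M \<delta> :: real assume "x \<in> C" "0 < \<delta>"
    then obtain h where h: "0 < h" "h < \<delta>" "M * h < g (x + h) - g x" unfolding C_def RUd_def by blast
    show "\<exists>l u. l < u \<and> u - l < \<delta> \<and> l \<le> x \<and> x \<le> u \<and> M * (u - l) < g u - g l"
      using h by (intro exI[of _ x] exI[of _ "x + h"]) auto
  qed
  have "negligible (\<Union>(A ` (\<rat> \<times> \<rat>)) \<union> \<Union>(B ` (\<rat> \<times> \<rat>)) \<union> C)"
    using QQ negA negB negC by (intro negligible_Un negligible_countable_Union) auto
  then show ?thesis using sub by (rule negligible_subset)
qed



lemma mono_negligible_nondiff:
  fixes g :: "real \<Rightarrow> real"
  assumes mono: "mono g"
  shows "negligible {x. \<not> g differentiable (at x)}"
proof -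
  have "{x. \<not> g differentiable (at x)} = (\<Union>n::nat. {x \<in> {-real n<..<real n}. \<not> g differentiable (at x)})"
  proof safe
    fix x assume "\<not> g differentiable (at x)"
    obtain n :: nat where "\<bar>x\<bar> < real n" using reals_Archimedean2 by blast
    then show "x \<in> (\<Union>n::nat. {x \<in> {-real n<..<real n}. \<not> g differentiable (at x)})"
      using \<open>\<not> g differentiable (at x)\<close> by (intro UN_I[where a=n]) (auto simp: abs_less_iff)
  qed
  also have "negligible \<dots>"
    by (intro negligible_Union_nat mono_ae_differentiable_interval[OF mono])
  finally show ?thesis .
qed

lemma mono_ae_differentiable:
  fixes g :: "real \<Rightarrow> real"
  assumes mono: "mono g"
  shows "AE x in lebesgue. g differentiable (at x)"
proof (rule AE_I')
  show "{x. \<not> g differentiable (at x)} \<in> null_sets lebesgue"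
    using mono_negligible_nondiff[OF mono] by (simp add: negligible_iff_null_sets)
qed auto

lemma deriv_quotient_seq:
  fixes g :: "real \<Rightarrow> real"
  assumes "g differentiable (at x)"
  shows "(\<lambda>n. (g (x + 1 / real (Suc n)) - g x) * real (Suc n)) \<longlonglongrightarrow> deriv g x"
proof -
  have D: "((\<lambda>h. (g (x + h) - g x) / h) \<longlongrightarrow> deriv g x) (at 0)"
    using assms unfolding DERIV_deriv_iff_real_differentiable[symmetric] DERIV_def .
  have h: "filterlim (\<lambda>n. 1 / real (Suc n)) (at 0) sequentially"
  proof (rule filterlim_atI)
    show "(\<lambda>n. 1 / real (Suc n)) \<longlonglongrightarrow> 0" using LIMSEQ_inverse_real_of_nat by (simp add: inverse_eq_divide)
    show "\<forall>\<^sub>F n in sequentially. 1 / real (Suc n) \<noteq> 0" by simp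
  qed
  have "(\<lambda>n. (g (x + 1 / real (Suc n)) - g x) / (1 / real (Suc n))) \<longlonglongrightarrow> deriv g x"
    using filterlim_compose[OF D h] by simp
  then show ?thesis by simp
qed

lemma local_cong_deriv:
  fixes f g :: "real \<Rightarrow> real"
  assumes "open S" "x \<in> S" "\<And>y. y \<in> S \<Longrightarrow> f y = g y"
  shows "deriv f x = deriv g x" "f differentiable (at x) \<longleftrightarrow> g differentiable (at x)"
proof -
  have ev: "eventually (\<lambda>y. y \<in> UNIV \<longrightarrow> f y = g y) (nhds x)"
    using eventually_nhds_in_open[OF assms(1,2)] by (rule eventually_mono) (use assms(3) in auto)
  have eq: "DERIV f x :> D \<longleftrightarrow> DERIV g x :> D" for D
    by (rule has_field_derivative_cong_ev[OF refl ev refl refl]) simp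
  show "deriv f x = deriv g x" unfolding deriv_def eq ..
  show "f differentiable (at x) \<longleftrightarrow> g differentiable (at x)"
    unfolding real_differentiable_def eq ..
qed

lemma mono_deriv_nonneg:
  fixes g :: "real \<Rightarrow> real"
  assumes "mono g" "g differentiable (at x)"
  shows "0 \<le> deriv g x"
proof (rule LIMSEQ_le_const[OF deriv_quotient_seq[OF assms(2)]])
  show "\<exists>N. \<forall>n\<ge>N. 0 \<le> (g (x + 1 / real (Suc n)) - g x) * real (Suc n)"
    using assms(1) by (auto simp: mono_def)
qed

lemma mono_deriv_measurable:
  fixes g :: "real \<Rightarrow> real"
  assumes mono: "mono g"
  shows "deriv g \<in> borel_measurable lebesgue"
proof -
  define q where "q = (\<lambda>n x. (g (x + 1 / real (Suc n)) - g x) * real (Suc n))"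
  have gb: "g \<in> borel_measurable borel" using borel_measurable_mono[OF mono] .
  have qm: "q n \<in> borel_measurable lebesgue" for n
  proof -
    have "(\<lambda>x. g (x + 1 / real (Suc n))) \<in> borel_measurable borel"
      using gb by measurable
    then have "q n \<in> borel_measurable borel" unfolding q_def using gb by measurable
    then have "q n \<in> lborel \<rightarrow>\<^sub>M borel" by (simp only: measurable_lborel2)
    then show ?thesis by (rule measurable_completion)
  qed
  have "(\<lambda>x. lim (\<lambda>n. q n x)) \<in> borel_measurable lebesgue"
    by (rule borel_measurable_lim_metric) (rule qm)
  moreover have "AE x in lebesgue. lim (\<lambda>n. q n x) = deriv g x"
    using mono_ae_differentiable[OF mono]
  proof (rule eventually_mono)
    fix x assume "g differentiable (at x)"
    then show "lim (\<lambda>n. q n x) = deriv g x" unfolding q_def by (intro limI deriv_quotient_seq)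
  qed
  ultimately show ?thesis by (rule borel_measurable_AE)
qed

lemma mono_integrable_on:
  fixes g :: "real \<Rightarrow> real"
  assumes "mono g" shows "g integrable_on {c..d}"
  by (rule integrable_on_mono_on) (rule mono_imp_mono_on[OF assms])

lemma mono_quot_integral:
  fixes g :: "real \<Rightarrow> real"
  assumes mono: "mono g" and ab: "a \<le> b" and h: "0 < h"
  shows "(\<lambda>x. (1 / h) * (g (x + h) - g x)) integrable_on {a..b}"
    and "integral {a..b} (\<lambda>x. (1 / h) * (g (x + h) - g x)) \<le> g (b + h) - g a"
proof -
  have gi: "g integrable_on {c..d}" for c d using mono_integrable_on[OF mono] .
  have sh: "(\<lambda>x. g (x + h)) = g \<circ> ((+) h)" by (auto simp: add.commute)
  have shi: "(\<lambda>x. g (x + h)) integrable_on {a..b}"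
    unfolding sh integrable_on_shift_Icc_real using gi .
  have shv: "integral {a..b} (\<lambda>x. g (x + h)) = integral {a+h..b+h} g"
    unfolding sh integral_shift_Icc_real ..
  have dif: "(\<lambda>x. g (x + h) - g x) integrable_on {a..b}" using shi gi by (rule integrable_diff)
  then show "(\<lambda>x. (1 / h) * (g (x + h) - g x)) integrable_on {a..b}"
    using integrable_on_cmult_left[OF dif, of "1/h"] by simp
  have c1: "integral {a..b} g + integral {b..b+h} g = integral {a..b+h} g"
    using ab h gi by (intro Henstock_Kurzweil_Integration.integral_combine) auto
  have c2: "integral {a..a+h} g + integral {a+h..b+h} g = integral {a..b+h} g"
    using ab h gi by (intro Henstock_Kurzweil_Integration.integral_combine) auto
  have u: "integral {b..b+h} g \<le> integral {b..b+h} (\<lambda>x. g (b + h))"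
    using gi by (intro integral_le) (auto intro: monoD[OF mono])
  have l: "integral {a..a+h} (\<lambda>x. g a) \<le> integral {a..a+h} g"
    using gi by (intro integral_le) (auto intro: monoD[OF mono])
  have "integral {a..b} (\<lambda>x. g (x + h) - g x) = integral {a+h..b+h} g - integral {a..b} g"
    using integral_diff[OF shi gi[of a b]] shv by simp
  also have "\<dots> = integral {b..b+h} g - integral {a..a+h} g" using c1 c2 by linarith
  also have "\<dots> \<le> h * g (b + h) - h * g a" using u l h by simp
  finally have "integral {a..b} (\<lambda>x. g (x + h) - g x) \<le> h * (g (b + h) - g a)"
    by (simp add: algebra_simps)
  then show "integral {a..b} (\<lambda>x. (1 / h) * (g (x + h) - g x)) \<le> g (b + h) - g a"
    using h by (simp add: field_simps)
qed

lemma ftc_mono_le: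
  fixes g :: "real \<Rightarrow> real"
  assumes mono: "mono g" and ab: "a \<le> b" and \<delta>: "0 < \<delta>"
  shows "set_integrable lebesgue {a..b} (deriv g)"
    and "(LINT x:{a..b}|lebesgue. deriv g x) \<le> g (b + \<delta>) - g a"
proof -
  define hh where "hh = (\<lambda>n::nat. 1 / real (Suc n))"
  have hh0: "0 < hh n" for n unfolding hh_def by simp
  define q where "q = (\<lambda>n x. (1 / hh n) * (g (x + hh n) - g x))"
  define u where "u = (\<lambda>n x. ennreal (q n x) * indicator {a..b} x)"
  define C where "C = g (b + \<delta>) - g a"
  have C0: "0 \<le> C" unfolding C_def using monoD[OF mono, of a "b + \<delta>"] ab \<delta> by simp
  have qnn: "0 \<le> q n x" for n x
    unfolding q_def using monoD[OF mono, of x "x + hh n"] hh0[of n] by simp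
  have gb: "g \<in> borel_measurable borel" using borel_measurable_mono[OF mono] .
  have um: "u n \<in> borel_measurable lebesgue" for n
  proof -
    have "(\<lambda>x. g (x + hh n)) \<in> borel_measurable borel" using gb by measurable
    then have "q n \<in> borel_measurable borel" unfolding q_def using gb by measurable
    then have "u n \<in> borel_measurable borel" unfolding u_def by measurable
    then have "u n \<in> lborel \<rightarrow>\<^sub>M borel" by (simp only: measurable_lborel2)
    then show ?thesis by (rule measurable_completion)
  qed
  obtain N where N: "hh N \<le> \<delta>"
  proof -
    obtain N :: nat where "1 / \<delta> < real N" using reals_Archimedean2 by blast
    then have "hh N \<le> \<delta>" unfolding hh_def using \<delta> by (simp add: field_simps)
    then show ?thesis using that by blast
  qed
  have hhmono: "hh n \<le> hh N" if "N \<le> n" for n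
    unfolding hh_def using that by (simp add: frac_le)
  have ubound: "integral\<^sup>N lebesgue (u n) \<le> ennreal C" if "N \<le> n" for n
  proof -
    have "integral\<^sup>N lebesgue (u n) = integral\<^sup>N lborel (u n)" by (simp add: nn_integral_completion)
    also have "\<dots> = ennreal (integral {a..b} (q n))"
    proof -
      have qi: "q n integrable_on {a..b}" unfolding q_def by (rule mono_quot_integral(1)[OF mono ab hh0])
      show ?thesis unfolding u_def
        by (rule nn_integral_has_integral_lebesgue'[OF _ integrable_integral[OF qi]]) (rule qnn)
    qed
    also have "\<dots> \<le> ennreal C"
    proof (rule ennreal_leI)
      have "integral {a..b} (q n) \<le> g (b + hh n) - g a"
        unfolding q_def by (rule mono_quot_integral(2)[OF mono ab hh0])
      also have "\<dots> \<le> C" unfolding C_def using monoD[OF mono, of "b + hh n" "b + \<delta>"] hhmono[OF that] N by simp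
      finally show "integral {a..b} (q n) \<le> C" .
    qed
    finally show ?thesis .
  qed
  have lim: "AE x in lebesgue. liminf (\<lambda>n. u n x) = ennreal (deriv g x) * indicator {a..b} x"
    using mono_ae_differentiable[OF mono]
  proof (rule eventually_mono)
    fix x assume dx: "g differentiable (at x)"
    have "(\<lambda>n. q n x) \<longlonglongrightarrow> deriv g x"
      using deriv_quotient_seq[OF dx] unfolding q_def hh_def by (simp add: mult.commute)
    then have "(\<lambda>n. u n x) \<longlonglongrightarrow> ennreal (deriv g x) * indicator {a..b} x"
      unfolding u_def by (cases "x \<in> {a..b}") (auto intro: tendsto_ennrealI)
    then show "liminf (\<lambda>n. u n x) = ennreal (deriv g x) * indicator {a..b} x"
      by (intro lim_imp_Liminf) auto
  qed
  have "(\<integral>\<^sup>+ x. ennreal (deriv g x) * indicator {a..b} x \<partial>lebesgue) = (\<integral>\<^sup>+ x. liminf (\<lambda>n. u n x) \<partial>lebesgue)"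
    using lim by (intro nn_integral_cong_AE) auto
  also have "\<dots> \<le> liminf (\<lambda>n. integral\<^sup>N lebesgue (u n))"
    by (rule nn_integral_liminf) (rule um)
  also have "\<dots> \<le> liminf (\<lambda>n. ennreal C)"
    by (rule Liminf_mono) (use ubound in \<open>auto simp: eventually_sequentially\<close>)
  also have "\<dots> = ennreal C" by (simp add: Liminf_const)
  finally have nnb: "(\<integral>\<^sup>+ x. ennreal (deriv g x) * indicator {a..b} x \<partial>lebesgue) \<le> ennreal C" .
  have dm: "deriv g \<in> borel_measurable lebesgue" by (rule mono_deriv_measurable[OF mono])
  have fm: "(\<lambda>x. indicator {a..b} x *\<^sub>R deriv g x) \<in> borel_measurable lebesgue"
    using dm by (intro borel_measurable_scaleR borel_measurable_indicator) auto
  have fnn: "AE x in lebesgue. 0 \<le> indicator {a..b} x *\<^sub>R deriv g x"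
    using mono_ae_differentiable[OF mono]
    by (rule eventually_mono) (auto simp: indicator_def intro: mono_deriv_nonneg[OF mono])
  have nneq: "(\<integral>\<^sup>+ x. ennreal (indicator {a..b} x *\<^sub>R deriv g x) \<partial>lebesgue)
      = (\<integral>\<^sup>+ x. ennreal (deriv g x) * indicator {a..b} x \<partial>lebesgue)"
    by (intro nn_integral_cong) (auto simp: indicator_def)
  show "set_integrable lebesgue {a..b} (deriv g)"
    unfolding set_integrable_def
  proof (rule integrableI_nonneg[OF fm fnn])
    show "(\<integral>\<^sup>+ x. ennreal (indicator {a..b} x *\<^sub>R deriv g x) \<partial>lebesgue) < \<infinity>"
      unfolding nneq using nnb by (simp add: le_less_trans)
  qed
  have "(LINT x:{a..b}|lebesgue. deriv g x) = enn2real (\<integral>\<^sup>+ x. ennreal (indicator {a..b} x *\<^sub>R deriv g x) \<partial>lebesgue)"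
    unfolding set_lebesgue_integral_def by (rule integral_eq_nn_integral[OF fm fnn])
  also have "\<dots> \<le> C" unfolding nneq by (rule enn2real_leI[OF C0 nnb])
  finally show "(LINT x:{a..b}|lebesgue. deriv g x) \<le> g (b + \<delta>) - g a" unfolding C_def .
qed

lemma set_integral_const_Icc:
  fixes c :: real
  assumes "a \<le> b"
  shows "set_integrable lebesgue {a..b} (\<lambda>x. c)" "(LINT x:{a..b}|lebesgue. c) = c * (b - a)"
proof -
  have eq: "(\<lambda>x. indicator {a..b} x *\<^sub>R c) = (\<lambda>x. c * indicator {a..b} x)" by (auto simp: indicator_def)
  have ii: "integrable lebesgue (indicator {a..b} :: real \<Rightarrow> real)"
    using assms by (simp add: integrable_indicator_iff emeasure_lborel_Icc)
  show "set_integrable lebesgue {a..b} (\<lambda>x. c)" unfolding set_integrable_def eq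
    using ii by (rule integrable_mult_right)
  show "(LINT x:{a..b}|lebesgue. c) = c * (b - a)" unfolding set_lebesgue_integral_def eq
    using assms by simp
qed

lemma ftc_mono_lip:
  fixes g :: "real \<Rightarrow> real"
  assumes mono: "mono g" and lip: "\<And>x y. \<bar>g x - g y\<bar> \<le> L * \<bar>x - y\<bar>" and ab: "a \<le> b"
  shows "set_integrable lebesgue {a..b} (deriv g)"
    and "(LINT x:{a..b}|lebesgue. deriv g x) = g b - g a"
proof -
  define h where "h = (\<lambda>x. L * x - g x)"
  have L0: "0 \<le> L" using lip[of 0 1] by simp
  have gup: "g y - g x \<le> L * (y - x)" if "x \<le> y" for x y using lip[of y x] that by simp
  have monoh: "mono h" unfolding h_def mono_def using gup by (simp add: algebra_simps)
  show gi: "set_integrable lebesgue {a..b} (deriv g)" using ftc_mono_le(1)[OF mono ab, of 1] by simp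
  have hi: "set_integrable lebesgue {a..b} (deriv h)" using ftc_mono_le(1)[OF monoh ab, of 1] by simp
  have dh: "AE x in lebesgue. deriv h x = L - deriv g x"
    using mono_ae_differentiable[OF mono]
  proof (rule eventually_mono)
    fix x assume "g differentiable (at x)"
    then have "DERIV g x :> deriv g x" by (simp add: DERIV_deriv_iff_real_differentiable)
    then have "DERIV h x :> L - deriv g x" unfolding h_def by (auto intro!: derivative_eq_intros)
    then show "deriv h x = L - deriv g x" by (rule DERIV_imp_deriv)
  qed
  have ci: "set_integrable lebesgue {a..b} (\<lambda>x. L)" using set_integral_const_Icc[OF ab] by simp
  have hint: "(LINT x:{a..b}|lebesgue. deriv h x) = L * (b - a) - (LINT x:{a..b}|lebesgue. deriv g x)"
  proof -
    have "(LINT x:{a..b}|lebesgue. deriv h x) = (LINT x:{a..b}|lebesgue. L - deriv g x)"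
      using dh mono_deriv_measurable[OF monoh] mono_deriv_measurable[OF mono]
      by (intro set_lebesgue_integral_cong_AE) (auto elim: eventually_mono intro: borel_measurable_diff)
    also have "\<dots> = (LINT x:{a..b}|lebesgue. L) - (LINT x:{a..b}|lebesgue. deriv g x)"
      using ci gi by (rule set_integral_diff)
    finally show ?thesis using set_integral_const_Icc(2)[OF ab] by simp
  qed
  have "\<bar>(LINT x:{a..b}|lebesgue. deriv g x) - (g b - g a)\<bar> \<le> L * \<delta>" if \<delta>: "0 < \<delta>" for \<delta>
  proof -
    have up: "(LINT x:{a..b}|lebesgue. deriv g x) \<le> g (b + \<delta>) - g a" by (rule ftc_mono_le(2)[OF mono ab \<delta>])
    have lo: "(LINT x:{a..b}|lebesgue. deriv h x) \<le> h (b + \<delta>) - h a" by (rule ftc_mono_le(2)[OF monoh ab \<delta>])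
    have "g (b + \<delta>) - g b \<le> L * \<delta>" using gup[of b "b + \<delta>"] \<delta> by simp
    moreover have "g b \<le> g (b + \<delta>)" using monoD[OF mono, of b "b + \<delta>"] \<delta> by simp
    ultimately show ?thesis using up lo hint unfolding h_def by (simp add: algebra_simps abs_le_iff)
  qed
  then show "(LINT x:{a..b}|lebesgue. deriv g x) = g b - g a"
  proof -
    assume H: "\<And>\<delta>. 0 < \<delta> \<Longrightarrow> \<bar>(LINT x:{a..b}|lebesgue. deriv g x) - (g b - g a)\<bar> \<le> L * \<delta>"
    have "\<bar>(LINT x:{a..b}|lebesgue. deriv g x) - (g b - g a)\<bar> \<le> 0"
    proof (rule field_le_epsilon)
      fix e :: real assume e: "0 < e"
      have "\<bar>(LINT x:{a..b}|lebesgue. deriv g x) - (g b - g a)\<bar> \<le> L * (e / (L + 1))"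
        using H[of "e / (L + 1)"] e L0 by simp
      also have "\<dots> \<le> e" using e L0 by (simp add: field_simps)
      finally show "\<bar>(LINT x:{a..b}|lebesgue. deriv g x) - (g b - g a)\<bar> \<le> 0 + e" by simp
    qed
    then show ?thesis by simp
  qed
qed



lemma sub_part1: "subdistribution F \<Longrightarrow> \<forall>x y. 0 \<le> x \<longrightarrow> 0 \<le> y \<longrightarrow> 0 \<le> F x y"
  unfolding subdistribution_def by (rule conjunct1)
lemma sub_part2: "subdistribution F \<Longrightarrow> \<forall>x1 x2 y1 y2. 0 \<le> x1 \<longrightarrow> x1 \<le> x2 \<longrightarrow> 0 \<le> y1 \<longrightarrow> y1 \<le> y2 \<longrightarrow>
        F x2 y2 - F x1 y2 - F x2 y1 + F x1 y1 \<ge> 0"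
  unfolding subdistribution_def by (drule conjunct2) (rule conjunct1)
lemma sub_part3: "subdistribution F \<Longrightarrow> \<forall>x y. 0 \<le> x \<longrightarrow> 0 \<le> y \<longrightarrow> F x y \<le> min x y"
  unfolding subdistribution_def by (drule conjunct2, drule conjunct2) (rule conjunct1)
lemma sub_part4: "subdistribution F \<Longrightarrow> \<forall>x y x' y'. 0 \<le> x \<longrightarrow> 0 \<le> y \<longrightarrow> 0 \<le> x' \<longrightarrow> 0 \<le> y' \<longrightarrow>
        \<bar>F x y - F x' y'\<bar> \<le> \<bar>x - x'\<bar> + \<bar>y - y'\<bar>"
  unfolding subdistribution_def by (drule conjunct2, drule conjunct2) (rule conjunct2)
lemmas sub_parts = sub_part1 sub_part2 sub_part3 sub_part4

lemma sub_nonneg: "subdistribution F \<Longrightarrow> 0 \<le> x \<Longrightarrow> 0 \<le> y \<Longrightarrow> 0 \<le> F x y"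
  using sub_parts(1) by blast
lemma sub_2inc: "subdistribution F \<Longrightarrow> 0 \<le> x1 \<Longrightarrow> x1 \<le> x2 \<Longrightarrow> 0 \<le> y1 \<Longrightarrow> y1 \<le> y2 \<Longrightarrow>
    F x1 y2 + F x2 y1 \<le> F x2 y2 + F x1 y1"
proof -
  assume "subdistribution F" "0 \<le> x1" "x1 \<le> x2" "0 \<le> y1" "y1 \<le> y2"
  then have "F x2 y2 - F x1 y2 - F x2 y1 + F x1 y1 \<ge> 0" using sub_parts(2)[of F] by blast
  then show ?thesis by simp
qed
lemma sub_le_min: "subdistribution F \<Longrightarrow> 0 \<le> x \<Longrightarrow> 0 \<le> y \<Longrightarrow> F x y \<le> min x y"
  using sub_parts(3) by blast
lemma sub_lip: "subdistribution F \<Longrightarrow> 0 \<le> x \<Longrightarrow> 0 \<le> y \<Longrightarrow> 0 \<le> x' \<Longrightarrow> 0 \<le> y' \<Longrightarrow>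
    \<bar>F x y - F x' y'\<bar> \<le> \<bar>x - x'\<bar> + \<bar>y - y'\<bar>"
  using sub_parts(4) by blast

lemma sub_zero1: "subdistribution F \<Longrightarrow> 0 \<le> y \<Longrightarrow> F 0 y = 0"
  using sub_nonneg[of F 0 y] sub_le_min[of F 0 y] by simp
lemma sub_zero2: "subdistribution F \<Longrightarrow> 0 \<le> x \<Longrightarrow> F x 0 = 0"
  using sub_nonneg[of F x 0] sub_le_min[of F x 0] by simp

lemma sub_mono2: "subdistribution F \<Longrightarrow> 0 \<le> x \<Longrightarrow> 0 \<le> s \<Longrightarrow> s \<le> t \<Longrightarrow> F x s \<le> F x t"
  using sub_2inc[of F 0 x s t] sub_zero1[of F s] sub_zero1[of F t] by simp
lemma sub_mono1: "subdistribution F \<Longrightarrow> 0 \<le> y \<Longrightarrow> 0 \<le> s \<Longrightarrow> s \<le> t \<Longrightarrow> F s y \<le> F t y"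
  using sub_2inc[of F s t 0 y] sub_zero2[of F s] sub_zero2[of F t] by simp

lemma sub_transpose: "subdistribution F \<Longrightarrow> subdistribution (\<lambda>x y. F y x)"
  unfolding subdistribution_def
proof (intro conjI allI impI; elim conjE)
  fix x1 x2 y1 y2 :: real
  assume H: "\<forall>x1 x2 y1 y2. 0 \<le> x1 \<longrightarrow> x1 \<le> x2 \<longrightarrow> 0 \<le> y1 \<longrightarrow> y1 \<le> y2 \<longrightarrow> 0 \<le> F x2 y2 - F x1 y2 - F x2 y1 + F x1 y1"
    "0 \<le> x1" "x1 \<le> x2" "0 \<le> y1" "y1 \<le> y2"
  show "0 \<le> F y2 x2 - F y2 x1 - F y1 x2 + F y1 x1" using H(1)[rule_format, of y1 y2 x1 x2] H(2-) by simp
next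
  fix x y x' y' :: real
  assume H: "\<forall>x y x' y'. 0 \<le> x \<longrightarrow> 0 \<le> y \<longrightarrow> 0 \<le> x' \<longrightarrow> 0 \<le> y' \<longrightarrow> \<bar>F x y - F x' y'\<bar> \<le> \<bar>x - x'\<bar> + \<bar>y - y'\<bar>"
    "0 \<le> x" "0 \<le> y" "0 \<le> x'" "0 \<le> y'"
  show "\<bar>F y x - F y' x'\<bar> \<le> \<bar>x - x'\<bar> + \<bar>y - y'\<bar>" using H(1)[rule_format, of y x y' x'] H(2-) by simp
qed (auto simp: min.commute)

definition Fe :: "(real \<Rightarrow> real \<Rightarrow> real) \<Rightarrow> real \<Rightarrow> real \<Rightarrow> real" where
  "Fe F y s = F y (max 0 s)"

lemma Fe_mono: "subdistribution F \<Longrightarrow> 0 \<le> y \<Longrightarrow> mono (Fe F y)"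
  unfolding Fe_def mono_def by (auto intro: sub_mono2)

lemma Fe_lip: "subdistribution F \<Longrightarrow> 0 \<le> y \<Longrightarrow> \<bar>Fe F y s - Fe F y t\<bar> \<le> 1 * \<bar>s - t\<bar>"
proof -
  assume F: "subdistribution F" and y: "0 \<le> y"
  have "\<bar>Fe F y s - Fe F y t\<bar> \<le> \<bar>y - y\<bar> + \<bar>max 0 s - max 0 t\<bar>"
    unfolding Fe_def by (rule sub_lip[OF F]) (use y in auto)
  also have "\<dots> \<le> \<bar>s - t\<bar>" by (auto simp: max_def abs_if)
  finally show ?thesis by simp
qed

lemma Fe_cong: "0 < t \<Longrightarrow> deriv (\<lambda>s. F y s) t = deriv (Fe F y) t"
    "0 < t \<Longrightarrow> (\<lambda>s. F y s) differentiable (at t) \<longleftrightarrow> Fe F y differentiable (at t)"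
  by (rule local_cong_deriv[of "{0<..}"]; simp add: Fe_def)+

lemma lip_deriv_bound:
  fixes g :: "real \<Rightarrow> real"
  assumes lip: "\<And>x y. \<bar>g x - g y\<bar> \<le> L * \<bar>x - y\<bar>" and d: "g differentiable (at x)"
  shows "\<bar>deriv g x\<bar> \<le> L"
proof -
  have "(\<lambda>n. \<bar>(g (x + 1 / real (Suc n)) - g x) * real (Suc n)\<bar>) \<longlonglongrightarrow> \<bar>deriv g x\<bar>"
    by (intro tendsto_rabs deriv_quotient_seq[OF d])
  moreover have "\<bar>(g (x + 1 / real (Suc n)) - g x) * real (Suc n)\<bar> \<le> L" for n
  proof -
    have "\<bar>g (x + 1 / real (Suc n)) - g x\<bar> \<le> L * (1 / real (Suc n))" using lip[of "x + 1 / real (Suc n)" x] by simp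
    then have "\<bar>g (x + 1 / real (Suc n)) - g x\<bar> * real (Suc n) \<le> L * (1 / real (Suc n)) * real (Suc n)"
      by (intro mult_right_mono) auto
    then show ?thesis by (simp add: abs_mult)
  qed
  ultimately show ?thesis by (intro LIMSEQ_le_const2) auto
qed

definition d2 :: "(real \<Rightarrow> real \<Rightarrow> real) \<Rightarrow> real \<Rightarrow> real \<Rightarrow> real" where
  "d2 F y t = deriv (Fe F y) t"

lemma d2_meas: "subdistribution F \<Longrightarrow> 0 \<le> y \<Longrightarrow> d2 F y \<in> borel_measurable lebesgue"
  unfolding d2_def[abs_def] by (rule mono_deriv_measurable[OF Fe_mono])

lemma d2_bounds:
  assumes F: "subdistribution F" and y: "0 \<le> y"
  shows "AE t in lebesgue. 0 \<le> d2 F y t \<and> d2 F y t \<le> 1"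
  using mono_ae_differentiable[OF Fe_mono[OF F y]]
proof (rule eventually_mono)
  fix t assume d: "Fe F y differentiable (at t)"
  show "0 \<le> d2 F y t \<and> d2 F y t \<le> 1"
    using mono_deriv_nonneg[OF Fe_mono[OF F y] d] lip_deriv_bound[OF Fe_lip[OF F y] d]
    unfolding d2_def by simp
qed

lemma d2_int_Icc:
  assumes F: "subdistribution F" and y: "0 \<le> y" and T: "0 \<le> T"
  shows "set_integrable lebesgue {0..T} (d2 F y)" "(LINT t:{0..T}|lebesgue. d2 F y t) = F y T"
proof -
  show "set_integrable lebesgue {0..T} (d2 F y)"
    unfolding d2_def[abs_def] by (rule ftc_mono_lip(1)[OF Fe_mono[OF F y] Fe_lip[OF F y] T])
  have "(LINT t:{0..T}|lebesgue. d2 F y t) = Fe F y T - Fe F y 0"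
    unfolding d2_def by (rule ftc_mono_lip(2)[OF Fe_mono[OF F y] Fe_lip[OF F y] T])
  then show "(LINT t:{0..T}|lebesgue. d2 F y t) = F y T"
    using T sub_zero2[OF F y] unfolding Fe_def by simp
qed

lemma d2_mono:
  assumes F: "subdistribution F" and y: "0 \<le> y" "y \<le> y'"
  shows "AE t in lebesgue. d2 F y t \<le> d2 F y' t"
proof -
  have y': "0 \<le> y'" using y by simp
  have "AE t in lebesgue. Fe F y differentiable (at t) \<and> Fe F y' differentiable (at t)"
    using mono_ae_differentiable[OF Fe_mono[OF F y(1)]] mono_ae_differentiable[OF Fe_mono[OF F y']]
    by eventually_elim auto
  then show ?thesis
  proof (rule eventually_mono)
    fix t assume d: "Fe F y differentiable (at t) \<and> Fe F y' differentiable (at t)"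
    define D where "D = (\<lambda>s. Fe F y' s - Fe F y s)"
    have monoD: "mono D" unfolding mono_def D_def Fe_def
    proof (intro allI impI)
      fix s s' :: real assume "s \<le> s'"
      then show "F y' (max 0 s) - F y (max 0 s) \<le> F y' (max 0 s') - F y (max 0 s')"
      proof -
        have "F y (max 0 s') + F y' (max 0 s) \<le> F y' (max 0 s') + F y (max 0 s)"
          by (rule sub_2inc[OF F y(1) y(2)]) (use \<open>s \<le> s'\<close> in auto)
        then show ?thesis by linarith
      qed
    qed
    have "DERIV D t :> d2 F y' t - d2 F y t"
      unfolding D_def d2_def using d by (intro DERIV_diff) (auto simp: DERIV_deriv_iff_real_differentiable)
    then have "deriv D t = d2 F y' t - d2 F y t" "D differentiable (at t)"
      by (auto simp: DERIV_imp_deriv real_differentiable_def)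
    with mono_deriv_nonneg[OF monoD] show "d2 F y t \<le> d2 F y' t" by force
  qed
qed

lemma d2_int_Ici:
  assumes F: "subdistribution F" and y: "0 \<le> y"
  shows "set_integrable lebesgue {0..} (d2 F y)" "(\<lambda>n. F y (real n)) \<longlonglongrightarrow> (LINT t:{0..}|lebesgue. d2 F y t)"
proof -
  define fi where "fi = (\<lambda>n::nat. \<lambda>t. indicator {0..real n} t *\<^sub>R d2 F y t)"
  define u where "u = (\<lambda>t. indicator {0..} t *\<^sub>R d2 F y t)"
  have i: "integrable lebesgue (fi n)" for n
    using d2_int_Icc(1)[OF F y, of "real n"] unfolding fi_def set_integrable_def by simp
  have ival: "integral\<^sup>L lebesgue (fi n) = F y (real n)" for n
    using d2_int_Icc(2)[OF F y, of "real n"] unfolding fi_def set_lebesgue_integral_def by simp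
  have mono: "AE t in lebesgue. mono (\<lambda>n. fi n t)"
    using d2_bounds[OF F y]
  proof (rule eventually_mono)
    fix t assume "0 \<le> d2 F y t \<and> d2 F y t \<le> 1"
    then show "mono (\<lambda>n. fi n t)" unfolding fi_def mono_def
      by (auto simp: indicator_def)
  qed
  have pos: "AE t in lebesgue. 0 \<le> fi n t" for n
    using d2_bounds[OF F y] by (rule eventually_mono) (auto simp: fi_def indicator_def)
  have lim: "AE t in lebesgue. (\<lambda>n. fi n t) \<longlonglongrightarrow> u t"
  proof (rule always_eventually, rule allI)
    fix t :: real
    obtain N :: nat where N: "t \<le> real N" using real_arch_simple by blast
    have "eventually (\<lambda>n. fi n t = u t) sequentially"
      unfolding eventually_sequentially
    proof (intro exI[of _ N] allI impI)
      fix n assume "N \<le> n"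
      then have "t \<le> real n" using N by (meson of_nat_le_iff order_trans)
      then show "fi n t = u t" unfolding fi_def u_def by (auto simp: indicator_def)
    qed
    then show "(\<lambda>n. fi n t) \<longlonglongrightarrow> u t" by (rule tendsto_eventually)
  qed
  have inc: "incseq (\<lambda>n. F y (real n))"
    unfolding incseq_def using sub_mono2[OF F y] by simp
  have bdd: "bdd_above (range (\<lambda>n. F y (real n)))"
    using sub_le_min[OF F y] by (intro bdd_aboveI[of _ y]) force
  have conv: "(\<lambda>n. F y (real n)) \<longlonglongrightarrow> (SUP n. F y (real n))"
    by (rule LIMSEQ_incseq_SUP[OF bdd inc])
  have um: "u \<in> borel_measurable lebesgue"
    unfolding u_def using d2_meas[OF F y] by (intro borel_measurable_scaleR borel_measurable_indicator) auto
  have "integrable lebesgue u" "integral\<^sup>L lebesgue u = (SUP n. F y (real n))"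
    using integral_monotone_convergence_nonneg[OF i mono pos lim _ um] conv ival by simp_all
  then show "set_integrable lebesgue {0..} (d2 F y)" "(\<lambda>n. F y (real n)) \<longlonglongrightarrow> (LINT t:{0..}|lebesgue. d2 F y t)"
    unfolding set_integrable_def set_lebesgue_integral_def u_def[symmetric] using conv by simp_all
qed

definition phi :: "(real \<Rightarrow> real \<Rightarrow> real) \<Rightarrow> real \<Rightarrow> real" where
  "phi F y = (LINT t:{0..}|lebesgue. d2 F y t)"

lemma phi_lim: "subdistribution F \<Longrightarrow> 0 \<le> y \<Longrightarrow> (\<lambda>n. F y (real n)) \<longlonglongrightarrow> phi F y"
  unfolding phi_def by (rule d2_int_Ici(2))

lemma phi_mono:
  assumes F: "subdistribution F" and y: "0 \<le> y" "y \<le> y'"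
  shows "phi F y \<le> phi F y'"
proof (rule LIMSEQ_le[OF phi_lim[OF F y(1)] phi_lim[OF F]])
  show "0 \<le> y'" using y by simp
  have "F y (real n) \<le> F y' (real n)" for n using sub_mono1[OF F _ y(1) y(2), of "real n"] by simp
  then show "\<exists>N. \<forall>n\<ge>N. F y (real n) \<le> F y' (real n)" by blast
qed

lemma phi_lip:
  assumes F: "subdistribution F" and y: "0 \<le> y" "0 \<le> y'"
  shows "\<bar>phi F y - phi F y'\<bar> \<le> \<bar>y - y'\<bar>"
proof -
  have "(\<lambda>n. \<bar>F y (real n) - F y' (real n)\<bar>) \<longlonglongrightarrow> \<bar>phi F y - phi F y'\<bar>"
    by (intro tendsto_rabs tendsto_diff phi_lim[OF F] y)
  moreover have "\<bar>F y (real n) - F y' (real n)\<bar> \<le> \<bar>y - y'\<bar>" for n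
    using sub_lip[OF F y(1) _ y(2), of "real n" "real n"] by simp
  ultimately show ?thesis by (intro LIMSEQ_le_const2) auto
qed

lemma AE_ne0: "AE t in lebesgue. t \<noteq> (0::real)"
proof (rule AE_I')
  show "{0::real} \<in> null_sets lebesgue" using negligible_sing[of "0::real"] by (simp add: negligible_iff_null_sets)
qed auto

definition GG :: "(real \<Rightarrow> real \<Rightarrow> real) \<Rightarrow> (real \<Rightarrow> real) \<Rightarrow> real \<Rightarrow> real" where
  "GG F f y = (LINT t:{0..}|lebesgue. d2 F y t * f t)"

definition Gx :: "(real \<Rightarrow> real \<Rightarrow> real) \<Rightarrow> (real \<Rightarrow> real) \<Rightarrow> real \<Rightarrow> real" where
  "Gx F f y = GG F f (max 0 y)"

lemma d2_f_meas:
  assumes F: "subdistribution F" and y: "0 \<le> y" and fm: "(\<lambda>t. indicator {0..} t *\<^sub>R f t) \<in> borel_measurable lebesgue"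
  shows "(\<lambda>t. indicator {0..} t *\<^sub>R (d2 F y t * f t)) \<in> borel_measurable lebesgue"
proof -
  have "(\<lambda>t. d2 F y t * (indicator {0..} t *\<^sub>R f t)) \<in> borel_measurable lebesgue"
    using d2_meas[OF F y] fm by (rule borel_measurable_times)
  then show ?thesis by (simp add: mult.left_commute)
qed

lemma d2_f_int:
  assumes F: "subdistribution F" and y: "0 \<le> y" and fi: "set_integrable lebesgue {0..} f"
  shows "set_integrable lebesgue {0..} (\<lambda>t. d2 F y t * f t)"
proof (rule set_integrable_bound[OF fi])
  show "set_borel_measurable lebesgue {0..} (\<lambda>t. d2 F y t * f t)"
    unfolding set_borel_measurable_def using d2_f_meas[OF F y] fi
    unfolding set_integrable_def by (blast intro: borel_measurable_integrable)
  show "AE t in lebesgue. t \<in> {0..} \<longrightarrow> norm (d2 F y t * f t) \<le> norm (f t)"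
    using d2_bounds[OF F y] by (rule eventually_mono) (auto simp: abs_mult intro: mult_left_le_one_le)
qed

lemma TF_eq_GG:
  assumes F: "subdistribution F" and y: "0 \<le> y" and fi: "(\<lambda>t. indicator {0..} t *\<^sub>R f t) \<in> borel_measurable lebesgue"
  shows "(LINT t:{0..}|lebesgue. deriv (\<lambda>s. F y s) t * f t) = GG F f y"
proof -
  have ae: "AE t in lebesgue. indicator {0..} t *\<^sub>R (deriv (\<lambda>s. F y s) t * f t) = indicator {0..} t *\<^sub>R (d2 F y t * f t)"
    using AE_ne0
  proof (rule eventually_mono)
    fix t :: real assume t: "t \<noteq> 0"
    show "indicator {0..} t *\<^sub>R (deriv (\<lambda>s. F y s) t * f t) = indicator {0..} t *\<^sub>R (d2 F y t * f t)"
    proof (cases "0 < t")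
      case True
      then have "deriv (\<lambda>s. F y s) t = d2 F y t" unfolding d2_def by (rule Fe_cong(1))
      then show ?thesis by simp
    next
      case False
      then have "t \<notin> {0..}" using t by auto
      then show ?thesis by simp
    qed
  qed
  have m2: "(\<lambda>t. indicator {0..} t *\<^sub>R (d2 F y t * f t)) \<in> borel_measurable lebesgue" by (rule d2_f_meas[OF F y fi])
  have m1: "(\<lambda>t. indicator {0..} t *\<^sub>R (deriv (\<lambda>s. F y s) t * f t)) \<in> borel_measurable lebesgue"
    using m2 ae by (rule borel_measurable_AE[OF _ AE_symmetric])
  show ?thesis unfolding GG_def set_lebesgue_integral_def by (rule integral_cong_AE[OF m1 m2 ae])
qed

lemma TF_eq_Gx:
  assumes F: "subdistribution F" and x: "0 < x" and fi: "(\<lambda>t. indicator {0..} t *\<^sub>R f t) \<in> borel_measurable lebesgue"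
  shows "TF F f x = deriv (Gx F f) x"
    and "(\<lambda>y. LINT t:{0..}|lebesgue. deriv (\<lambda>s. F y s) t * f t) differentiable (at x) \<longleftrightarrow> Gx F f differentiable (at x)"
  unfolding TF_def
  by (rule local_cong_deriv[of "{0<..}"]; (use x in simp)?; simp add: Gx_def TF_eq_GG[OF F _ fi])+

lemma set_int_meas: "set_integrable lebesgue {0..} f \<Longrightarrow> (\<lambda>t. indicator {0..} t *\<^sub>R f t) \<in> borel_measurable lebesgue"
  unfolding set_integrable_def by (rule borel_measurable_integrable)

lemma mono_seq_at_top:
  fixes g :: "real \<Rightarrow> real"
  assumes mono: "\<And>s t. 0 \<le> s \<Longrightarrow> s \<le> t \<Longrightarrow> g s \<le> g t" and bd: "\<And>t. 0 \<le> t \<Longrightarrow> g t \<le> L"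
    and lim: "(\<lambda>n. g (real n)) \<longlonglongrightarrow> L"
  shows "(g \<longlongrightarrow> L) at_top"
proof (rule order_tendstoI)
  fix a assume "a < L"
  then have "eventually (\<lambda>n. a < g (real n)) sequentially" by (rule order_tendstoD(1)[OF lim])
  then obtain N where N: "a < g (real N)" by (auto simp: eventually_sequentially)
  show "eventually (\<lambda>t. a < g t) at_top"
    unfolding eventually_at_top_linorder
    by (rule exI[of _ "real N"]) (use N mono in \<open>auto intro: less_le_trans\<close>)
next
  fix a assume "L < a"
  show "eventually (\<lambda>t. g t < a) at_top"
    unfolding eventually_at_top_linorder
    by (rule exI[of _ 0]) (use bd \<open>L < a\<close> in \<open>auto intro: le_less_trans\<close>)
qed

lemma phi_zero: "subdistribution F \<Longrightarrow> phi F 0 = 0"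
proof -
  assume F: "subdistribution F"
  have "(\<lambda>n. F 0 (real n)) \<longlonglongrightarrow> phi F 0" by (rule phi_lim[OF F]) simp
  moreover have "(\<lambda>n. F 0 (real n)) = (\<lambda>n. 0)" using sub_zero1[OF F] by auto
  ultimately show ?thesis by (simp add: LIMSEQ_const_iff)
qed

lemma GG_one: "subdistribution F \<Longrightarrow> GG F (indicator {0..}) y = phi F y"
  unfolding GG_def phi_def by (rule set_lebesgue_integral_cong) auto

lemma Ici_sets: "{0::real..} \<in> sets lebesgue"
  by (metis sets_completionI_sets sets_lborel borel_closed closed_atLeast)

lemma ind_meas: "(\<lambda>t::real. indicator {0..} t *\<^sub>R (indicator {0..} t :: real)) \<in> borel_measurable lebesgue"
  by (intro borel_measurable_scaleR borel_measurable_indicator Ici_sets)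

lemma markov_imp_margin:
  assumes F: "subdistribution F" and M: "AE x in lebesgue. 0 \<le> x \<longrightarrow> TF F (indicator {0..}) x = 1"
  shows "\<forall>w\<ge>0. ((\<lambda>t. F w t) \<longlongrightarrow> w) at_top"
proof (intro allI impI)
  fix w :: real assume w: "0 \<le> w"
  define \<psi> where "\<psi> = Gx F (indicator {0..})"
  have \<psi>eq: "\<psi> y = phi F (max 0 y)" for y unfolding \<psi>_def Gx_def using GG_one[OF F] by simp
  have mono\<psi>: "mono \<psi>" unfolding mono_def \<psi>eq by (auto intro: phi_mono[OF F])
  have lip\<psi>: "\<bar>\<psi> s - \<psi> t\<bar> \<le> 1 * \<bar>s - t\<bar>" for s t
  proof -
    have "\<bar>\<psi> s - \<psi> t\<bar> \<le> \<bar>max 0 s - max 0 t\<bar>" unfolding \<psi>eq by (rule phi_lip[OF F]) auto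
    also have "\<dots> \<le> \<bar>s - t\<bar>" by (auto simp: max_def abs_if)
    finally show ?thesis by simp
  qed
  have "(LINT x:{0..w}|lebesgue. deriv \<psi> x) = \<psi> w - \<psi> 0" by (rule ftc_mono_lip(2)[OF mono\<psi> lip\<psi> w])
  also have "\<dots> = phi F w" unfolding \<psi>eq using w phi_zero[OF F] by simp
  finally have e1: "(LINT x:{0..w}|lebesgue. deriv \<psi> x) = phi F w" .
  have "(LINT x:{0..w}|lebesgue. deriv \<psi> x) = (LINT x:{0..w}|lebesgue. 1)"
  proof (rule set_lebesgue_integral_cong_AE)
    show "deriv \<psi> \<in> borel_measurable lebesgue" by (rule mono_deriv_measurable[OF mono\<psi>])
    show "AE x\<in>{0..w} in lebesgue. deriv \<psi> x = 1"
      using M AE_ne0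
    proof eventually_elim
      fix x :: real assume H: "0 \<le> x \<longrightarrow> TF F (indicator {0..}) x = 1" "x \<noteq> 0"
      show "x \<in> {0..w} \<longrightarrow> deriv \<psi> x = 1"
      proof
        assume "x \<in> {0..w}"
        then have "0 < x" using H(2) by auto
        then have "TF F (indicator {0..}) x = deriv \<psi> x" unfolding \<psi>_def by (rule TF_eq_Gx(1)[OF F _ ind_meas])
        then show "deriv \<psi> x = 1" using H(1) \<open>0 < x\<close> by simp
      qed
    qed
  qed auto
  also have "\<dots> = w" using set_integral_const_Icc(2)[OF w, of 1] by simp
  finally have pw: "phi F w = w" using e1 by simp
  show "((\<lambda>t. F w t) \<longlongrightarrow> w) at_top"
  proof (rule mono_seq_at_top)
    show "\<And>s t. 0 \<le> s \<Longrightarrow> s \<le> t \<Longrightarrow> F w s \<le> F w t" by (rule sub_mono2[OF F w])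
    show "\<And>t. 0 \<le> t \<Longrightarrow> F w t \<le> w" using sub_le_min[OF F w] by fastforce
    show "(\<lambda>n. F w (real n)) \<longlonglongrightarrow> w" using phi_lim[OF F w] pw by simp
  qed
qed



lemma GG_add:
  assumes F: "subdistribution F" and y: "0 \<le> y"
    and fi: "set_integrable lebesgue {0..} f" and gi: "set_integrable lebesgue {0..} g"
  shows "GG F (\<lambda>t. f t + g t) y = GG F f y + GG F g y"
proof -
  have "GG F (\<lambda>t. f t + g t) y = (LINT t:{0..}|lebesgue. d2 F y t * f t + d2 F y t * g t)"
    unfolding GG_def by (simp add: distrib_left)
  also have "\<dots> = GG F f y + GG F g y"
    unfolding GG_def by (rule set_integral_add(2)[OF d2_f_int[OF F y fi] d2_f_int[OF F y gi]])
  finally show ?thesis .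
qed

lemma GG_diff:
  assumes F: "subdistribution F" and y: "0 \<le> y"
    and fi: "set_integrable lebesgue {0..} f" and gi: "set_integrable lebesgue {0..} g"
  shows "GG F (\<lambda>t. f t - g t) y = GG F f y - GG F g y"
proof -
  have "GG F (\<lambda>t. f t - g t) y = (LINT t:{0..}|lebesgue. d2 F y t * f t - d2 F y t * g t)"
    unfolding GG_def by (simp add: right_diff_distrib)
  also have "\<dots> = GG F f y - GG F g y"
    unfolding GG_def by (rule set_integral_diff(2)[OF d2_f_int[OF F y fi] d2_f_int[OF F y gi]])
  finally show ?thesis .
qed

lemma GG_mono_y:
  assumes F: "subdistribution F" and y: "0 \<le> y" "y \<le> y'"
    and fi: "set_integrable lebesgue {0..} f" and fnn: "\<And>t. 0 \<le> f t"
  shows "GG F f y \<le> GG F f y'"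
  unfolding GG_def
proof (rule set_integral_mono_AE[OF d2_f_int[OF F y(1) fi] d2_f_int[OF F _ fi]])
  show "0 \<le> y'" using y by simp
  show "AE t\<in>{0..} in lebesgue. d2 F y t * f t \<le> d2 F y' t * f t"
    using d2_mono[OF F y] by (rule eventually_mono) (auto intro: mult_right_mono fnn)
qed

lemma GG_nonneg:
  assumes F: "subdistribution F" and y: "0 \<le> y"
    and fi: "set_integrable lebesgue {0..} f" and fnn: "\<And>t. 0 \<le> f t"
  shows "0 \<le> GG F f y"
  unfolding GG_def set_lebesgue_integral_def
proof (rule integral_nonneg_AE)
  show "AE t in lebesgue. 0 \<le> indicator {0..} t *\<^sub>R (d2 F y t * f t)"
    using d2_bounds[OF F y] by (rule eventually_mono) (auto intro!: mult_nonneg_nonneg fnn)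
qed

lemma GG_le_int:
  assumes F: "subdistribution F" and y: "0 \<le> y"
    and fi: "set_integrable lebesgue {0..} f" and fnn: "\<And>t. 0 \<le> f t"
  shows "GG F f y \<le> (LINT t:{0..}|lebesgue. f t)"
  unfolding GG_def
proof (rule set_integral_mono_AE[OF d2_f_int[OF F y fi] fi])
  show "AE t\<in>{0..} in lebesgue. d2 F y t * f t \<le> f t"
    using d2_bounds[OF F y] by (rule eventually_mono) (auto intro: mult_left_le_one_le fnn)
qed

lemma d2_zero: "subdistribution F \<Longrightarrow> d2 F 0 t = 0"
proof -
  assume F: "subdistribution F"
  have "Fe F 0 = (\<lambda>s. 0)" unfolding Fe_def using sub_zero1[OF F] by auto
  then show ?thesis unfolding d2_def by (simp add: DERIV_imp_deriv)
qed

lemma GG_zero: "subdistribution F \<Longrightarrow> GG F f 0 = 0"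
  unfolding GG_def by (simp add: d2_zero)

lemma GG_lip:
  assumes F: "subdistribution F" and y: "0 \<le> y" "y \<le> y'"
    and fi: "set_integrable lebesgue {0..} f" and fnn: "\<And>t. 0 \<le> f t" and fM: "\<And>t. f t \<le> M"
  shows "GG F f y' - GG F f y \<le> M * (y' - y)"
proof -
  have y': "0 \<le> y'" using y by simp
  have i1: "set_integrable lebesgue {0..} (d2 F y)" "set_integrable lebesgue {0..} (d2 F y')"
    using d2_int_Ici(1)[OF F y(1)] d2_int_Ici(1)[OF F y'] .
  have "GG F f y' - GG F f y = (LINT t:{0..}|lebesgue. d2 F y' t * f t - d2 F y t * f t)"
    unfolding GG_def by (rule set_integral_diff(2)[symmetric, OF d2_f_int[OF F y' fi] d2_f_int[OF F y(1) fi]])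
  also have "\<dots> \<le> (LINT t:{0..}|lebesgue. M * (d2 F y' t - d2 F y t))"
  proof (rule set_integral_mono_AE)
    show "set_integrable lebesgue {0..} (\<lambda>t. d2 F y' t * f t - d2 F y t * f t)"
      using d2_f_int[OF F y' fi] d2_f_int[OF F y(1) fi] by (rule set_integral_diff(1))
    show "set_integrable lebesgue {0..} (\<lambda>t. M * (d2 F y' t - d2 F y t))"
      using set_integral_diff(1)[OF i1(2) i1(1)] by (rule set_integrable_mult_right)
    show "AE t\<in>{0..} in lebesgue. d2 F y' t * f t - d2 F y t * f t \<le> M * (d2 F y' t - d2 F y t)"
      using d2_mono[OF F y]
    proof (rule eventually_mono)
      fix t assume "d2 F y t \<le> d2 F y' t"
      then have "(d2 F y' t - d2 F y t) * f t \<le> (d2 F y' t - d2 F y t) * M"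
        by (intro mult_left_mono fM) simp
      then show "t \<in> {0..} \<longrightarrow> d2 F y' t * f t - d2 F y t * f t \<le> M * (d2 F y' t - d2 F y t)"
        by (simp add: algebra_simps)
    qed
  qed
  also have "\<dots> = M * (phi F y' - phi F y)"
    unfolding phi_def using set_integral_diff(2)[OF i1(2) i1(1)] by simp
  also have "\<dots> \<le> M * (y' - y)"
  proof (rule mult_left_mono)
    show "phi F y' - phi F y \<le> y' - y" using phi_lip[OF F y' y(1)] y by simp
    show "0 \<le> M" using fnn[of 0] fM[of 0] by simp
  qed
  finally show ?thesis .
qed

lemma Gx_mono:
  assumes F: "subdistribution F" and fi: "set_integrable lebesgue {0..} f" and fnn: "\<And>t. 0 \<le> f t"
  shows "mono (Gx F f)"
  unfolding mono_def Gx_def by (auto intro!: GG_mono_y[OF F _ _ fi fnn])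

lemma Gx_lip:
  assumes F: "subdistribution F" and fi: "set_integrable lebesgue {0..} f" and fnn: "\<And>t. 0 \<le> f t" and fM: "\<And>t. f t \<le> M"
  shows "\<bar>Gx F f s - Gx F f t\<bar> \<le> M * \<bar>s - t\<bar>"
proof -
  have M0: "0 \<le> M" using fnn[of 0] fM[of 0] by simp
  have key: "\<bar>Gx F f s - Gx F f t\<bar> \<le> M * \<bar>s - t\<bar>" if st: "s \<le> t" for s t
  proof -
    have "0 \<le> Gx F f t - Gx F f s" using monoD[OF Gx_mono[OF F fi fnn] st] by simp
    moreover have "Gx F f t - Gx F f s \<le> M * (max 0 t - max 0 s)"
      unfolding Gx_def by (rule GG_lip[OF F _ _ fi fnn fM]) (use st in auto)
    moreover have "M * (max 0 t - max 0 s) \<le> M * \<bar>s - t\<bar>"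
      using st M0 by (intro mult_left_mono) (auto simp: max_def)
    ultimately show ?thesis by simp
  qed
  show ?thesis
  proof (cases "s \<le> t")
    case True then show ?thesis by (rule key)
  next
    case False
    then have "\<bar>Gx F f t - Gx F f s\<bar> \<le> M * \<bar>t - s\<bar>" by (intro key) simp
    then show ?thesis by (simp add: abs_minus_commute)
  qed
qed

lemma trunc_int:
  fixes f :: "real \<Rightarrow> real" and c :: real
  assumes fi: "set_integrable lebesgue {0..} f" and fnn: "\<And>t. 0 \<le> f t" and c: "0 \<le> c"
  shows "set_integrable lebesgue {0..} (\<lambda>t. min (f t) c)"
proof (rule set_integrable_bound[OF fi])
  have fm: "(\<lambda>t. indicator {0..} t *\<^sub>R f t) \<in> borel_measurable lebesgue" by (rule set_int_meas[OF fi])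
  have eq: "(\<lambda>t. indicator {0..} t *\<^sub>R min (f t) c) = (\<lambda>t. min (indicator {0..} t *\<^sub>R f t) (indicator {0..} t *\<^sub>R c))"
    using fnn c by (auto simp: indicator_def)
  show "set_borel_measurable lebesgue {0..} (\<lambda>t. min (f t) c)"
    unfolding set_borel_measurable_def eq
    by (intro borel_measurable_min fm borel_measurable_scaleR borel_measurable_indicator Ici_sets borel_measurable_const)
  show "AE t in lebesgue. t \<in> {0..} \<longrightarrow> norm (min (f t) c) \<le> norm (f t)"
    using fnn c by (auto simp: min_def)
qed

lemma trunc_lim:
  fixes f :: "real \<Rightarrow> real"
  assumes fi: "set_integrable lebesgue {0..} f" and fnn: "\<And>t. 0 \<le> f t"
  shows "(\<lambda>n. LINT t:{0..}|lebesgue. f t - min (f t) (real n)) \<longlonglongrightarrow> 0"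
proof -
  have fm: "(\<lambda>t. indicator {0..} t *\<^sub>R f t) \<in> borel_measurable lebesgue" by (rule set_int_meas[OF fi])
  have ri: "set_integrable lebesgue {0..} (\<lambda>t. f t - min (f t) (real n))" for n
    using fi trunc_int[OF fi fnn, of "real n"] by (rule set_integral_diff(1)) simp
  have "(\<lambda>n. integral\<^sup>L lebesgue (\<lambda>t. indicator {0..} t *\<^sub>R (f t - min (f t) (real n)))) \<longlonglongrightarrow>
      integral\<^sup>L lebesgue (\<lambda>t::real. 0::real)"
  proof (rule integral_dominated_convergence[where w = "\<lambda>t::real. indicator {0..} t *\<^sub>R f t"
      and s = "\<lambda>n (t::real). indicator {0..} t *\<^sub>R (f t - min (f t) (real n))" and f = "\<lambda>t::real. 0::real"
      and M = lebesgue])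
    show "(\<lambda>t::real. 0::real) \<in> borel_measurable lebesgue" by simp
    show "(\<lambda>t. indicator {0..} t *\<^sub>R (f t - min (f t) (real n))) \<in> borel_measurable lebesgue" for n
      using ri[of n] unfolding set_integrable_def by (rule borel_measurable_integrable)
    show "integrable lebesgue (\<lambda>t. indicator {0..} t *\<^sub>R f t)" using fi unfolding set_integrable_def .
    show "AE t in lebesgue. (\<lambda>n. indicator {0..} t *\<^sub>R (f t - min (f t) (real n))) \<longlonglongrightarrow> 0"
    proof (rule always_eventually, rule allI)
      fix t :: real
      obtain N :: nat where N: "f t \<le> real N" using real_arch_simple by blast
      have "eventually (\<lambda>n. indicator {0..} t *\<^sub>R (f t - min (f t) (real n)) = 0) sequentially"
        unfolding eventually_sequentially
      proof (intro exI[of _ N] allI impI)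
        fix n assume "N \<le> n"
        then have "f t \<le> real n" using N by (meson of_nat_le_iff order_trans)
        then show "indicator {0..} t *\<^sub>R (f t - min (f t) (real n)) = 0" by (simp add: min_def)
      qed
      then show "(\<lambda>n. indicator {0..} t *\<^sub>R (f t - min (f t) (real n))) \<longlonglongrightarrow> 0" by (rule tendsto_eventually)
    qed
    show "AE t in lebesgue. norm (indicator {0..} t *\<^sub>R (f t - min (f t) (real n))) \<le> indicator {0..} t *\<^sub>R f t" for n
      using fnn by (auto simp: indicator_def min_def)
  qed
  then show ?thesis unfolding set_lebesgue_integral_def by simp
qed

lemma deriv_nonneg_int:
  fixes g :: "real \<Rightarrow> real" and A :: "real set"
  assumes "mono g"
  shows "0 \<le> (LINT x:A|lebesgue. deriv g x)"
  unfolding set_lebesgue_integral_def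
proof (rule integral_nonneg_AE)
  show "AE x in lebesgue. 0 \<le> indicator A x *\<^sub>R deriv g x"
    using mono_ae_differentiable[OF assms]
    by (rule eventually_mono) (auto intro!: mult_nonneg_nonneg mono_deriv_nonneg[OF assms])
qed

lemma ftc_G:
  fixes f :: "real \<Rightarrow> real"
  assumes F: "subdistribution F" and fi: "set_integrable lebesgue {0..} f" and fnn: "\<And>t. 0 \<le> f t" and X: "0 \<le> X"
  shows "set_integrable lebesgue {0..X} (deriv (Gx F f))"
    and "(LINT x:{0..X}|lebesgue. deriv (Gx F f) x) = GG F f X"
proof -
  have monoG: "mono (Gx F f)" by (rule Gx_mono[OF F fi fnn])
  show intG: "set_integrable lebesgue {0..X} (deriv (Gx F f))" using ftc_mono_le(1)[OF monoG X, of 1] by simp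
  define I where "I = (LINT x:{0..X}|lebesgue. deriv (Gx F f) x)"
  have bound: "\<bar>I - GG F f X\<bar> \<le> (LINT t:{0..}|lebesgue. f t - min (f t) (real n))" for n
  proof -
    define fn where "fn = (\<lambda>t. min (f t) (real n))"
    define rn where "rn = (\<lambda>t. f t - min (f t) (real n))"
    have fni: "set_integrable lebesgue {0..} fn" unfolding fn_def by (rule trunc_int[OF fi fnn]) simp
    have rni: "set_integrable lebesgue {0..} rn" unfolding rn_def using fi trunc_int[OF fi fnn, of "real n"]
      by (rule set_integral_diff(1)) simp
    have fnnn: "0 \<le> fn t" "fn t \<le> real n" for t unfolding fn_def using fnn[of t] by auto
    have rnnn: "0 \<le> rn t" for t unfolding rn_def by simp
    have split: "Gx F f y = Gx F fn y + Gx F rn y" for y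
    proof -
      have "Gx F f y = GG F (\<lambda>t. fn t + rn t) (max 0 y)" unfolding Gx_def fn_def rn_def by simp
      also have "\<dots> = Gx F fn y + Gx F rn y" unfolding Gx_def by (rule GG_add[OF F _ fni rni]) simp
      finally show ?thesis .
    qed
    have monoA: "mono (Gx F fn)" by (rule Gx_mono[OF F fni fnnn(1)])
    have monoB: "mono (Gx F rn)" by (rule Gx_mono[OF F rni rnnn])
    have lipA: "\<bar>Gx F fn s - Gx F fn t\<bar> \<le> real n * \<bar>s - t\<bar>" for s t by (rule Gx_lip[OF F fni fnnn])
    have iA: "set_integrable lebesgue {0..X} (deriv (Gx F fn))" by (rule ftc_mono_lip(1)[OF monoA lipA X])
    have vA: "(LINT x:{0..X}|lebesgue. deriv (Gx F fn) x) = GG F fn X"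
      using ftc_mono_lip(2)[OF monoA lipA X] X unfolding Gx_def by (simp add: GG_zero[OF F])
    have iB: "set_integrable lebesgue {0..X} (deriv (Gx F rn))" using ftc_mono_le(1)[OF monoB X, of 1] by simp
    have vB1: "(LINT x:{0..X}|lebesgue. deriv (Gx F rn) x) \<le> Gx F rn (X + 1) - Gx F rn 0"
      by (rule ftc_mono_le(2)[OF monoB X]) simp
    have vB2: "Gx F rn (X + 1) \<le> (LINT t:{0..}|lebesgue. rn t)"
      unfolding Gx_def by (rule GG_le_int[OF F _ rni rnnn]) simp
    have vB3: "Gx F rn 0 = 0" unfolding Gx_def by (simp add: GG_zero[OF F])
    have vB0: "0 \<le> (LINT x:{0..X}|lebesgue. deriv (Gx F rn) x)" by (rule deriv_nonneg_int[OF monoB])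
    have ae: "AE x in lebesgue. deriv (Gx F f) x = deriv (Gx F fn) x + deriv (Gx F rn) x"
      using mono_ae_differentiable[OF monoA] mono_ae_differentiable[OF monoB]
    proof eventually_elim
      fix x assume dA: "Gx F fn differentiable (at x)" and dB: "Gx F rn differentiable (at x)"
      have "DERIV (\<lambda>y. Gx F fn y + Gx F rn y) x :> deriv (Gx F fn) x + deriv (Gx F rn) x"
        using dA dB by (intro DERIV_add) (auto simp: DERIV_deriv_iff_real_differentiable)
      then have "DERIV (Gx F f) x :> deriv (Gx F fn) x + deriv (Gx F rn) x"
        by (simp add: split[abs_def] split)
      then show "deriv (Gx F f) x = deriv (Gx F fn) x + deriv (Gx F rn) x" by (rule DERIV_imp_deriv)
    qed
    have "I = (LINT x:{0..X}|lebesgue. deriv (Gx F fn) x + deriv (Gx F rn) x)"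
      unfolding I_def
    proof (rule set_lebesgue_integral_cong_AE)
      show "deriv (Gx F f) \<in> borel_measurable lebesgue" by (rule mono_deriv_measurable[OF monoG])
      show "(\<lambda>x. deriv (Gx F fn) x + deriv (Gx F rn) x) \<in> borel_measurable lebesgue"
        using mono_deriv_measurable[OF monoA] mono_deriv_measurable[OF monoB] by (rule borel_measurable_add)
      show "AE x\<in>{0..X} in lebesgue. deriv (Gx F f) x = deriv (Gx F fn) x + deriv (Gx F rn) x"
        using ae by (rule eventually_mono) simp
    qed auto
    also have "\<dots> = GG F fn X + (LINT x:{0..X}|lebesgue. deriv (Gx F rn) x)"
      using set_integral_add(2)[OF iA iB] vA by simp
    finally have Ieq: "I = GG F fn X + (LINT x:{0..X}|lebesgue. deriv (Gx F rn) x)" .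
    have Geq: "GG F f X = GG F fn X + GG F rn X" using split[of X] X unfolding Gx_def by simp
    have r0: "0 \<le> GG F rn X" by (rule GG_nonneg[OF F X rni rnnn])
    have r1: "GG F rn X \<le> (LINT t:{0..}|lebesgue. rn t)" by (rule GG_le_int[OF F X rni rnnn])
    show ?thesis using Ieq Geq r0 r1 vB0 vB1 vB2 vB3 unfolding rn_def by (simp add: abs_le_iff)
  qed
  have "\<bar>I - GG F f X\<bar> \<le> 0"
    by (rule LIMSEQ_le[OF tendsto_const trunc_lim[OF fi fnn]]) (use bound in auto)
  then show "(LINT x:{0..X}|lebesgue. deriv (Gx F f) x) = GG F f X" unfolding I_def by simp
qed

lemma d2_lim1:
  assumes F: "subdistribution F" and st2: "\<forall>w\<ge>0. ((\<lambda>t. F t w) \<longlongrightarrow> w) at_top"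
  shows "AE t in lebesgue. 0 \<le> t \<longrightarrow> (\<lambda>n. d2 F (real n) t) \<longlonglongrightarrow> 1"
proof -
  define k where "k = (\<lambda>t. lim (\<lambda>n. d2 F (real n) t))"
  have km: "k \<in> borel_measurable lebesgue"
    unfolding k_def by (rule borel_measurable_lim_metric) (rule d2_meas[OF F], simp)
  have good: "AE t in lebesgue. \<forall>n::nat. (0 \<le> d2 F (real n) t \<and> d2 F (real n) t \<le> 1) \<and> d2 F (real n) t \<le> d2 F (real (Suc n)) t"
    unfolding AE_all_countable
  proof
    fix n :: nat
    show "AE t in lebesgue. (0 \<le> d2 F (real n) t \<and> d2 F (real n) t \<le> 1) \<and> d2 F (real n) t \<le> d2 F (real (Suc n)) t"
      using d2_bounds[OF F, of "real n"] d2_mono[OF F, of "real n" "real (Suc n)"] by (auto elim: eventually_elim2)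
  qed
  have conv: "AE t in lebesgue. (\<lambda>n. d2 F (real n) t) \<longlonglongrightarrow> k t \<and> 0 \<le> k t \<and> k t \<le> 1"
    using good
  proof (rule eventually_mono)
    fix t assume H: "\<forall>n::nat. (0 \<le> d2 F (real n) t \<and> d2 F (real n) t \<le> 1) \<and> d2 F (real n) t \<le> d2 F (real (Suc n)) t"
    have inc: "incseq (\<lambda>n. d2 F (real n) t)" using H by (intro incseq_SucI) auto
    have bdd: "bdd_above (range (\<lambda>n. d2 F (real n) t))" using H by (intro bdd_aboveI[of _ 1]) auto
    have c: "(\<lambda>n. d2 F (real n) t) \<longlonglongrightarrow> (SUP n. d2 F (real n) t)" by (rule LIMSEQ_incseq_SUP[OF bdd inc])
    then have c': "(\<lambda>n. d2 F (real n) t) \<longlonglongrightarrow> k t" unfolding k_def using limI by metis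
    have "0 \<le> k t" using H by (intro LIMSEQ_le_const[OF c']) auto
    moreover have "k t \<le> 1" using H by (intro LIMSEQ_le_const2[OF c']) auto
    ultimately show "(\<lambda>n. d2 F (real n) t) \<longlonglongrightarrow> k t \<and> 0 \<le> k t \<and> k t \<le> 1" using c' by simp
  qed
  have onw: "AE t in lebesgue. t \<in> {0..real w} \<longrightarrow> k t = 1" for w :: nat
  proof -
    have w0: "0 \<le> real w" by simp
    have ci: "set_integrable lebesgue {0..real w} (\<lambda>t. 1::real)" by (rule set_integral_const_Icc(1)[OF w0])
    have ki: "set_integrable lebesgue {0..real w} k"
    proof (rule set_integrable_bound[OF ci])
      show "set_borel_measurable lebesgue {0..real w} k"
        unfolding set_borel_measurable_def using km by (intro borel_measurable_scaleR borel_measurable_indicator) auto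
      show "AE t in lebesgue. t \<in> {0..real w} \<longrightarrow> norm (k t) \<le> norm (1::real)"
        using conv by (rule eventually_mono) auto
    qed
    have lim1: "(\<lambda>n. LINT t:{0..real w}|lebesgue. d2 F (real n) t) \<longlonglongrightarrow> (LINT t:{0..real w}|lebesgue. k t)"
      unfolding set_lebesgue_integral_def
    proof (rule integral_dominated_convergence[where w = "\<lambda>t::real. indicator {0..real w} t *\<^sub>R (1::real)"])
      show "(\<lambda>t. indicator {0..real w} t *\<^sub>R k t) \<in> borel_measurable lebesgue"
        using km by (intro borel_measurable_scaleR borel_measurable_indicator) auto
      show "(\<lambda>t. indicator {0..real w} t *\<^sub>R d2 F (real n) t) \<in> borel_measurable lebesgue" for n
        using d2_meas[OF F, of "real n"] by (intro borel_measurable_scaleR borel_measurable_indicator) auto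
      show "integrable lebesgue (\<lambda>t::real. indicator {0..real w} t *\<^sub>R (1::real))"
        using ci unfolding set_integrable_def .
      show "AE t in lebesgue. (\<lambda>n. indicator {0..real w} t *\<^sub>R d2 F (real n) t) \<longlonglongrightarrow> indicator {0..real w} t *\<^sub>R k t"
        using conv by (rule eventually_mono) (auto intro: tendsto_intros)
      show "AE t in lebesgue. norm (indicator {0..real w} t *\<^sub>R d2 F (real n) t) \<le> indicator {0..real w} t *\<^sub>R (1::real)" for n
        using d2_bounds[OF F, of "real n"] by (rule eventually_mono) (auto simp: indicator_def)
    qed
    have lim2: "(\<lambda>n. LINT t:{0..real w}|lebesgue. d2 F (real n) t) \<longlonglongrightarrow> real w"
    proof -
      have "(\<lambda>n. F (real n) (real w)) \<longlonglongrightarrow> real w"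
        using filterlim_compose[OF st2[rule_format, OF w0] filterlim_real_sequentially] by simp
      moreover have "(LINT t:{0..real w}|lebesgue. d2 F (real n) t) = F (real n) (real w)" for n
        by (rule d2_int_Icc(2)[OF F]) auto
      ultimately show ?thesis by simp
    qed
    have kint: "(LINT t:{0..real w}|lebesgue. k t) = real w" using LIMSEQ_unique[OF lim1 lim2] .
    have "(LINT t:{0..real w}|lebesgue. 1 - k t) = 0"
      using set_integral_diff(2)[OF ci ki] kint set_integral_const_Icc(2)[OF w0, of 1] by simp
    then have "integral\<^sup>L lebesgue (\<lambda>t. indicator {0..real w} t *\<^sub>R (1 - k t)) = 0"
      unfolding set_lebesgue_integral_def .
    moreover have "integrable lebesgue (\<lambda>t. indicator {0..real w} t *\<^sub>R (1 - k t))"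
      using set_integral_diff(1)[OF ci ki] unfolding set_integrable_def .
    moreover have "AE t in lebesgue. 0 \<le> indicator {0..real w} t *\<^sub>R (1 - k t)"
      using conv by (rule eventually_mono) (auto simp: indicator_def)
    ultimately have "AE t in lebesgue. indicator {0..real w} t *\<^sub>R (1 - k t) = 0"
      using integral_nonneg_eq_0_iff_AE by blast
    then show ?thesis by (rule eventually_mono) (auto simp: indicator_def)
  qed
  have "AE t in lebesgue. \<forall>w::nat. t \<in> {0..real w} \<longrightarrow> k t = 1"
    unfolding AE_all_countable using onw by blast
  then show ?thesis using conv
  proof eventually_elim
    fix t assume H: "\<forall>w::nat. t \<in> {0..real w} \<longrightarrow> k t = 1"
      and c: "(\<lambda>n. d2 F (real n) t) \<longlonglongrightarrow> k t \<and> 0 \<le> k t \<and> k t \<le> 1"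
    show "0 \<le> t \<longrightarrow> (\<lambda>n. d2 F (real n) t) \<longlonglongrightarrow> 1"
    proof
      assume t: "0 \<le> t"
      obtain w :: nat where "t \<le> real w" using real_arch_simple by blast
      then have "k t = 1" using H t by auto
      then show "(\<lambda>n. d2 F (real n) t) \<longlonglongrightarrow> 1" using c by simp
    qed
  qed
qed

lemma lim_G:
  fixes f :: "real \<Rightarrow> real"
  assumes F: "subdistribution F" and st2: "\<forall>w\<ge>0. ((\<lambda>t. F t w) \<longlongrightarrow> w) at_top"
    and fi: "set_integrable lebesgue {0..} f"
  shows "(\<lambda>n. GG F f (real n)) \<longlonglongrightarrow> (LINT t:{0..}|lebesgue. f t)"
  unfolding GG_def set_lebesgue_integral_def
proof (rule integral_dominated_convergence[where w = "\<lambda>t::real. indicator {0..} t *\<^sub>R \<bar>f t\<bar>"])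
  show "(\<lambda>t. indicator {0..} t *\<^sub>R f t) \<in> borel_measurable lebesgue" by (rule set_int_meas[OF fi])
  show "(\<lambda>t. indicator {0..} t *\<^sub>R (d2 F (real n) t * f t)) \<in> borel_measurable lebesgue" for n
    by (rule d2_f_meas[OF F _ set_int_meas[OF fi]]) simp
  show "integrable lebesgue (\<lambda>t::real. indicator {0..} t *\<^sub>R \<bar>f t\<bar>)"
    using set_integrable_abs[OF fi] unfolding set_integrable_def .
  show "AE t in lebesgue. (\<lambda>n. indicator {0..} t *\<^sub>R (d2 F (real n) t * f t)) \<longlonglongrightarrow> indicator {0..} t *\<^sub>R f t"
    using d2_lim1[OF F st2]
  proof (rule eventually_mono)
    fix t :: real assume H: "0 \<le> t \<longrightarrow> (\<lambda>n. d2 F (real n) t) \<longlonglongrightarrow> 1"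
    show "(\<lambda>n. indicator {0..} t *\<^sub>R (d2 F (real n) t * f t)) \<longlonglongrightarrow> indicator {0..} t *\<^sub>R f t"
    proof (cases "0 \<le> t")
      case True
      then have "(\<lambda>n. d2 F (real n) t * f t) \<longlonglongrightarrow> 1 * f t" using H by (intro tendsto_mult tendsto_const) auto
      then show ?thesis using True by simp
    next
      case False then show ?thesis by simp
    qed
  qed
  show "AE t in lebesgue. norm (indicator {0..} t *\<^sub>R (d2 F (real n) t * f t)) \<le> indicator {0..} t *\<^sub>R \<bar>f t\<bar>" for n
    using d2_bounds[OF F, of "real n"]
    by (rule eventually_mono) (auto simp: indicator_def abs_mult intro: mult_left_le_one_le)
qed

lemma core_nonneg:
  fixes f :: "real \<Rightarrow> real"
  assumes F: "subdistribution F" and st2: "\<forall>w\<ge>0. ((\<lambda>t. F t w) \<longlongrightarrow> w) at_top"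
    and fi: "set_integrable lebesgue {0..} f" and fnn: "\<And>t. 0 \<le> f t"
  shows "set_integrable lebesgue {0..} (deriv (Gx F f))"
    and "(LINT x:{0..}|lebesgue. deriv (Gx F f) x) = (LINT t:{0..}|lebesgue. f t)"
proof -
  have monoG: "mono (Gx F f)" by (rule Gx_mono[OF F fi fnn])
  define fi' where "fi' = (\<lambda>n::nat. \<lambda>x. indicator {0..real n} x *\<^sub>R deriv (Gx F f) x)"
  define u where "u = (\<lambda>x. indicator {0..} x *\<^sub>R deriv (Gx F f) x)"
  have i: "integrable lebesgue (fi' n)" for n
    using ftc_G(1)[OF F fi fnn, of "real n"] unfolding fi'_def set_integrable_def by simp
  have ival: "integral\<^sup>L lebesgue (fi' n) = GG F f (real n)" for n
    using ftc_G(2)[OF F fi fnn, of "real n"] unfolding fi'_def set_lebesgue_integral_def by simp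
  have dnn: "AE x in lebesgue. 0 \<le> deriv (Gx F f) x"
    using mono_ae_differentiable[OF monoG] by (rule eventually_mono) (rule mono_deriv_nonneg[OF monoG])
  have mono: "AE x in lebesgue. mono (\<lambda>n. fi' n x)"
    using dnn by (rule eventually_mono) (auto simp: fi'_def mono_def indicator_def)
  have pos: "AE x in lebesgue. 0 \<le> fi' n x" for n
    using dnn by (rule eventually_mono) (auto simp: fi'_def indicator_def)
  have lim: "AE x in lebesgue. (\<lambda>n. fi' n x) \<longlonglongrightarrow> u x"
  proof (rule always_eventually, rule allI)
    fix x :: real
    obtain N :: nat where N: "x \<le> real N" using real_arch_simple by blast
    have "eventually (\<lambda>n. fi' n x = u x) sequentially"
      unfolding eventually_sequentially
    proof (intro exI[of _ N] allI impI)
      fix n assume "N \<le> n"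
      then have "x \<le> real n" using N by (meson of_nat_le_iff order_trans)
      then show "fi' n x = u x" unfolding fi'_def u_def by (auto simp: indicator_def)
    qed
    then show "(\<lambda>n. fi' n x) \<longlonglongrightarrow> u x" by (rule tendsto_eventually)
  qed
  have um: "u \<in> borel_measurable lebesgue"
    unfolding u_def using mono_deriv_measurable[OF monoG]
    by (intro borel_measurable_scaleR borel_measurable_indicator Ici_sets)
  have ilim: "(\<lambda>n. integral\<^sup>L lebesgue (fi' n)) \<longlonglongrightarrow> (LINT t:{0..}|lebesgue. f t)"
    unfolding ival by (rule lim_G[OF F st2 fi])
  have "integrable lebesgue u" "integral\<^sup>L lebesgue u = (LINT t:{0..}|lebesgue. f t)"
    using integral_monotone_convergence_nonneg[OF i mono pos lim ilim um] by simp_all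
  then show "set_integrable lebesgue {0..} (deriv (Gx F f))"
      "(LINT x:{0..}|lebesgue. deriv (Gx F f) x) = (LINT t:{0..}|lebesgue. f t)"
    unfolding set_integrable_def set_lebesgue_integral_def u_def by simp_all
qed

lemma strict_T1:
  assumes F: "subdistribution F" and st1: "\<forall>w\<ge>0. ((\<lambda>t. F w t) \<longlongrightarrow> w) at_top"
  shows "AE x in lebesgue. 0 \<le> x \<longrightarrow> TF F (indicator {0..}) x = 1"
  using AE_ne0
proof (rule eventually_mono)
  fix x :: real assume x0: "x \<noteq> 0"
  show "0 \<le> x \<longrightarrow> TF F (indicator {0..}) x = 1"
  proof
    assume "0 \<le> x"
    then have x: "0 < x" using x0 by simp
    have pw: "phi F w = w" if w: "0 \<le> w" for w
    proof -
      have "(\<lambda>n. F w (real n)) \<longlonglongrightarrow> w"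
        using filterlim_compose[OF st1[rule_format, OF w] filterlim_real_sequentially] by simp
      then show ?thesis using LIMSEQ_unique[OF phi_lim[OF F w]] by blast
    qed
    have "TF F (indicator {0..}) x = deriv (Gx F (indicator {0..})) x" by (rule TF_eq_Gx(1)[OF F x ind_meas])
    also have "\<dots> = deriv (\<lambda>y. y) x"
    proof (rule local_cong_deriv(1)[of "{0<..}"])
      show "open {0::real<..}" by simp
      show "x \<in> {0<..}" using x by simp
      fix y :: real assume "y \<in> {0<..}"
      then show "Gx F (indicator {0..}) y = y" unfolding Gx_def using GG_one[OF F] pw by simp
    qed
    also have "\<dots> = 1" by (rule DERIV_imp_deriv) (rule DERIV_ident)
    finally show "TF F (indicator {0..}) x = 1" .
  qed
qed

lemma strict_T_int:
  fixes f :: "real \<Rightarrow> real"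
  assumes F: "subdistribution F" and st2: "\<forall>w\<ge>0. ((\<lambda>t. F t w) \<longlongrightarrow> w) at_top"
    and fi: "set_integrable lebesgue {0..} f"
  shows "set_integrable lebesgue {0..} (TF F f) \<and> (LINT x:{0..}|lebesgue. TF F f x) = (LINT x:{0..}|lebesgue. f x)"
proof -
  define fp where "fp = (\<lambda>t. (\<bar>f t\<bar> + f t) / 2)"
  define fm where "fm = (\<lambda>t. (\<bar>f t\<bar> - f t) / 2)"
  have fai: "set_integrable lebesgue {0..} (\<lambda>t. \<bar>f t\<bar>)" by (rule set_integrable_abs[OF fi])
  have fpi: "set_integrable lebesgue {0..} fp" unfolding fp_def
    using set_integral_add(1)[OF fai fi] by (rule set_integrable_divide)
  have fmi: "set_integrable lebesgue {0..} fm" unfolding fm_def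
    using set_integral_diff(1)[OF fai fi] by (rule set_integrable_divide)
  have fpn: "0 \<le> fp t" for t unfolding fp_def by simp
  have fmn: "0 \<le> fm t" for t unfolding fm_def by simp
  have fpm: "(\<lambda>t. fp t - fm t) = f" unfolding fp_def fm_def by (auto simp: field_simps)
  have monoP: "mono (Gx F fp)" by (rule Gx_mono[OF F fpi fpn])
  have monoM: "mono (Gx F fm)" by (rule Gx_mono[OF F fmi fmn])
  have split: "Gx F f y = Gx F fp y - Gx F fm y" for y
    unfolding Gx_def using GG_diff[OF F _ fpi fmi, of "max 0 y"] fpm by simp
  define D where "D = (\<lambda>x. deriv (Gx F fp) x - deriv (Gx F fm) x)"
  have Dm: "D \<in> borel_measurable lebesgue" unfolding D_def
    using mono_deriv_measurable[OF monoP] mono_deriv_measurable[OF monoM] by (rule borel_measurable_diff)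
  have ae: "AE x in lebesgue. indicator {0..} x *\<^sub>R TF F f x = indicator {0..} x *\<^sub>R D x"
    using mono_ae_differentiable[OF monoP] mono_ae_differentiable[OF monoM] AE_ne0
  proof eventually_elim
    fix x :: real assume dP: "Gx F fp differentiable (at x)" and dM: "Gx F fm differentiable (at x)" and x0: "x \<noteq> 0"
    show "indicator {0..} x *\<^sub>R TF F f x = indicator {0..} x *\<^sub>R D x"
    proof (cases "0 < x")
      case True
      have "DERIV (\<lambda>y. Gx F fp y - Gx F fm y) x :> deriv (Gx F fp) x - deriv (Gx F fm) x"
        using dP dM by (intro DERIV_diff) (auto simp: DERIV_deriv_iff_real_differentiable)
      then have "DERIV (Gx F f) x :> D x" unfolding D_def by (simp add: split[abs_def] split)
      then have "deriv (Gx F f) x = D x" by (rule DERIV_imp_deriv)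
      moreover have "TF F f x = deriv (Gx F f) x" by (rule TF_eq_Gx(1)[OF F True set_int_meas[OF fi]])
      ultimately show ?thesis by simp
    next
      case False
      then have "x \<notin> {0..}" using x0 by auto
      then show ?thesis by simp
    qed
  qed
  have m2: "(\<lambda>x. indicator {0..} x *\<^sub>R D x) \<in> borel_measurable lebesgue"
    using Dm by (intro borel_measurable_scaleR borel_measurable_indicator Ici_sets)
  have m1: "(\<lambda>x. indicator {0..} x *\<^sub>R TF F f x) \<in> borel_measurable lebesgue"
    using m2 ae by (rule borel_measurable_AE[OF _ AE_symmetric])
  have Di: "set_integrable lebesgue {0..} D" unfolding D_def
    using core_nonneg(1)[OF F st2 fpi fpn] core_nonneg(1)[OF F st2 fmi fmn] by (rule set_integral_diff(1))
  have Dv: "(LINT x:{0..}|lebesgue. D x) = (LINT x:{0..}|lebesgue. f x)"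
  proof -
    have "(LINT x:{0..}|lebesgue. D x) = (LINT x:{0..}|lebesgue. fp x) - (LINT x:{0..}|lebesgue. fm x)"
      unfolding D_def
      using set_integral_diff(2)[OF core_nonneg(1)[OF F st2 fpi fpn] core_nonneg(1)[OF F st2 fmi fmn]]
        core_nonneg(2)[OF F st2 fpi fpn] core_nonneg(2)[OF F st2 fmi fmn] by simp
    also have "\<dots> = (LINT x:{0..}|lebesgue. fp x - fm x)" using set_integral_diff(2)[OF fpi fmi] by simp
    also have "\<dots> = (LINT x:{0..}|lebesgue. f x)" using fpm by simp
    finally show ?thesis .
  qed
  have "set_integrable lebesgue {0..} (TF F f)"
    using Di unfolding set_integrable_def using integrable_cong_AE[OF m1 m2 ae] by simp
  moreover have "(LINT x:{0..}|lebesgue. TF F f x) = (LINT x:{0..}|lebesgue. D x)"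
    unfolding set_lebesgue_integral_def using integral_cong_AE[OF m1 m2 ae] .
  ultimately show ?thesis using Dv by simp
qed

lemma strict_imp_markov:
  assumes F: "subdistribution F" and st1: "\<forall>w\<ge>0. ((\<lambda>t. F w t) \<longlongrightarrow> w) at_top"
    and st2: "\<forall>w\<ge>0. ((\<lambda>t. F t w) \<longlongrightarrow> w) at_top"
  shows "markov_op (TF F)"
  unfolding markov_op_def using strict_T1[OF F st1] strict_T_int[OF F st2] by blast

theorem mainTheorem19:
  fixes F :: "real \<Rightarrow> real \<Rightarrow> real"
  assumes "subdistribution F"
  shows "strict_subdist F \<longleftrightarrow> markov_op (TF F) \<and> markov_op (TF (\<lambda>x y. F y x))"
proof
  assume "strict_subdist F"
  then have st1: "\<forall>w\<ge>0. ((\<lambda>t. F w t) \<longlongrightarrow> w) at_top" and st2: "\<forall>w\<ge>0. ((\<lambda>t. F t w) \<longlongrightarrow> w) at_top"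
    unfolding strict_subdist_def by blast+
  show "markov_op (TF F) \<and> markov_op (TF (\<lambda>x y. F y x))"
  proof
    show "markov_op (TF F)" by (rule strict_imp_markov[OF assms st1 st2])
    show "markov_op (TF (\<lambda>x y. F y x))"
      by (rule strict_imp_markov[OF sub_transpose[OF assms]]) (use st1 st2 in simp_all)
  qed
next
  assume M: "markov_op (TF F) \<and> markov_op (TF (\<lambda>x y. F y x))"
  have "\<forall>w\<ge>0. ((\<lambda>t. F w t) \<longlongrightarrow> w) at_top"
    by (rule markov_imp_margin[OF assms]) (use M in \<open>simp add: markov_op_def\<close>)
  moreover have "\<forall>w\<ge>0. ((\<lambda>t. (\<lambda>x y. F y x) w t) \<longlongrightarrow> w) at_top"
    by (rule markov_imp_margin[OF sub_transpose[OF assms]]) (use M in \<open>simp add: markov_op_def\<close>)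
  ultimately show "strict_subdist F" unfolding strict_subdist_def by simp
qed


end
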